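(* Let $R$ be a $G$-category and $P\colon R\to R/G$ the canonical functor. Then the pushdown $(P_\bullet,\phi_\bullet)\colon\operatorname{mod}R\to\operatorname{mod}R/G$ is a $G$-precovering, where $\operatorname{mod}R$ carries the $G$-action $X\mapsto{}^\alpha X$.
   Context: $\Bbbk$ is a commutative ring; all categories and functors are $\Bbbk$-linear; $G$ is a group. A $G$-category is a category $\mathcal C$ with a group homomorphism $G\to\operatorname{Aut}(\mathcal C)$, $\alpha\mapsto A_\alpha$, written $\alpha x,\alpha f$. For a $G$-invariant functor $(F,\phi)$ (natural isos $\phi_\alpha\colon F\to FA_\alpha$ with $\phi_1=\mathrm{id}$, $(\phi_\beta A_\alpha)\phi_\alpha=\phi_{\beta\alpha}$), it is a $G$-precovering if each $F^{(1)}_{x,y}\colon\bigoplus_\alpha\mathcal C(\alpha x,y)\to\mathcal C'(Fx,Fy)$, $(f_\alpha)\mapsto\sum F(f_\alpha)\phi_{\alpha,x}$, is bijective. $\operatorname{Mod}R$ is the category of contravariant $\Bbbk$-linear functors $R\to\operatorname{Mod}\Bbbk$; $\operatorname{mod}R$ is its full subcategory of finitely generated modules (quotients of finite direct sums of representables $R(-,x)$). $G$ acts on $\operatorname{Mod}R$ (and on $\operatorname{mod}R$) by ${}^\alpha X:=X\circ A_{\alpha^{-1}}$, ${}^\alpha u:=uA_{\alpha^{-1}}$. $R/G$: objects of $R$; morphisms $x\to y$ are row- and column-finite families $f=(f_{\beta,\alpha})_{(\alpha,\beta)\in G\times G}$ with $f_{\beta,\alpha}\in R(\alpha x,\beta y)$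 and $f_{\gamma\beta,\gamma\alpha}=\gamma(f_{\beta,\alpha})$; composition $(gf)_{\beta,\alpha}=\sum_\gamma g_{\beta,\gamma}f_{\gamma,\alpha}$. $Px=x$, $P(f)=(\delta_{\alpha,\beta}\alpha f)$. Pushdown: for $X\in\operatorname{Mod}R$, $(P_\bullet X)(x)=\bigoplus_{\alpha\in G}X(\alpha x)$, and for $f\colon x\to y$ in $R/G$, $(P_\bullet X)(f)\colon\bigoplus_\beta X(\beta y)\to\bigoplus_\alpha X(\alpha x)$ is the matrix with $(\alpha,\beta)$-entry $X(f_{\beta,\alpha})$; for $u\colon X\to X'$, $(P_\bullet u)_x=\bigoplus_\alpha u_{\alpha x}$. ($P_\bullet$ is left adjoint to $Y\mapsto Y\circ P$ and maps $\operatorname{mod}R$ into $\operatorname{mod}R/G$.) Its invariance adjuster: $(\phi_\bullet)_{\mu,X,x}\colon\bigoplus_\alpha X(\alpha x)\to(P_\bullet{}^\mu X)(x)=\bigoplus_\beta X(\mu^{-1}\beta x)$ maps the summand indexed by $\alpha$ identically onto the summand indexed by $\beta=\mu\alpha$. *)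

theory Defs
  imports Main HOL.Modules "HOL-Library.Function_Algebras"
begin

(* A (small) k-linear category: objects cOb, hom-sets cHom x y (pairwise disjoint,
  arrows know their source and target), composition ccmp g f = g o f, identities,
  and on each hom-set a k-module structure (czero, cadd, csmul) for which composition
  is bilinear. *)

record ('o, 'a, 'k) kcat =
  cOb :: "'o set"
  cHom :: "'o \<Rightarrow> 'o \<Rightarrow> 'a set"
  ccmp :: "'a \<Rightarrow> 'a \<Rightarrow> 'a"
  cid :: "'o \<Rightarrow> 'a"
  czero :: "'o \<Rightarrow> 'o \<Rightarrow> 'a"
  cadd :: "'a \<Rightarrow> 'a \<Rightarrow> 'a"
  csmul :: "'k \<Rightarrow> 'a \<Rightarrow> 'a"

definition kcat :: "('o, 'a, 'k::comm_ring_1) kcat \<Rightarrow> bool" where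
  "kcat C \<longleftrightarrow>
    (\<forall>x\<in>cOb C. \<forall>y\<in>cOb C. \<forall>x'\<in>cOb C. \<forall>y'\<in>cOb C. \<forall>f.
        f \<in> cHom C x y \<and> f \<in> cHom C x' y' \<longrightarrow> x = x' \<and> y = y') \<and>
    (\<forall>x\<in>cOb C. cid C x \<in> cHom C x x) \<and>
    (\<forall>x\<in>cOb C. \<forall>y\<in>cOb C. \<forall>f\<in>cHom C x y.
        ccmp C f (cid C x) = f \<and> ccmp C (cid C y) f = f) \<and>
    (\<forall>x\<in>cOb C. \<forall>y\<in>cOb C. \<forall>z\<in>cOb C. \<forall>f\<in>cHom C x y. \<forall>g\<in>cHom C y z.
        ccmp C g f \<in> cHom C x z) \<and>
    (\<forall>w\<in>cOb C. \<forall>x\<in>cOb C. \<forall>y\<in>cOb C. \<forall>z\<in>cOb C.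
       \<forall>f\<in>cHom C w x. \<forall>g\<in>cHom C x y. \<forall>h\<in>cHom C y z.
        ccmp C h (ccmp C g f) = ccmp C (ccmp C h g) f) \<and>
    (\<forall>x\<in>cOb C. \<forall>y\<in>cOb C.
        czero C x y \<in> cHom C x y \<and>
        (\<forall>f\<in>cHom C x y. \<forall>g\<in>cHom C x y. cadd C f g \<in> cHom C x y) \<and>
        (\<forall>c. \<forall>f\<in>cHom C x y. csmul C c f \<in> cHom C x y) \<and>
        (\<forall>f\<in>cHom C x y. \<forall>g\<in>cHom C x y. \<forall>h\<in>cHom C x y.
            cadd C (cadd C f g) h = cadd C f (cadd C g h)) \<and>
        (\<forall>f\<in>cHom C x y. \<forall>g\<in>cHom C x y. cadd C f g = cadd C g f) \<and>
        (\<forall>f\<in>cHom C x y. cadd C (czero C x y) f = f) \<and>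
        (\<forall>f\<in>cHom C x y. \<exists>g\<in>cHom C x y. cadd C f g = czero C x y) \<and>
        (\<forall>a b. \<forall>f\<in>cHom C x y. csmul C (a + b) f = cadd C (csmul C a f) (csmul C b f)) \<and>
        (\<forall>a. \<forall>f\<in>cHom C x y. \<forall>g\<in>cHom C x y.
            csmul C a (cadd C f g) = cadd C (csmul C a f) (csmul C a g)) \<and>
        (\<forall>a b. \<forall>f\<in>cHom C x y. csmul C (a * b) f = csmul C a (csmul C b f)) \<and>
        (\<forall>f\<in>cHom C x y. csmul C 1 f = f)) \<and>
    (\<forall>x\<in>cOb C. \<forall>y\<in>cOb C. \<forall>z\<in>cOb C.
       \<forall>f\<in>cHom C x y. \<forall>f'\<in>cHom C x y. \<forall>g\<in>cHom C y z. \<forall>g'\<in>cHom C y z. \<forall>c.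
        ccmp C (cadd C g g') f = cadd C (ccmp C g f) (ccmp C g' f) \<and>
        ccmp C g (cadd C f f') = cadd C (ccmp C g f) (ccmp C g f') \<and>
        ccmp C (csmul C c g) f = csmul C c (ccmp C g f) \<and>
        ccmp C g (csmul C c f) = csmul C c (ccmp C g f))"

(* The group G is a type of class group_add; the group product \<alpha>\<beta> is written \<alpha> + \<beta>,
  the unit 1 is 0 and \<alpha>\<inverse> is -\<alpha> (G need not be commutative).
  act \<alpha> x = \<alpha>x, actm \<alpha> f = \<alpha>f; \<alpha> \<mapsto> A_\<alpha> is a group homomorphism into the
  k-linear automorphisms of C. *)

definition Gcat :: "('o, 'a, 'k::comm_ring_1) kcat \<Rightarrow> ('g::group_add \<Rightarrow> 'o \<Rightarrow> 'o)
    \<Rightarrow> ('g \<Rightarrow> 'a \<Rightarrow> 'a) \<Rightarrow> bool" where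
  "Gcat C act actm \<longleftrightarrow> kcat C \<and>
    (\<forall>\<alpha>. \<forall>x\<in>cOb C. act \<alpha> x \<in> cOb C) \<and>
    (\<forall>x\<in>cOb C. act 0 x = x) \<and>
    (\<forall>\<alpha> \<beta>. \<forall>x\<in>cOb C. act (\<alpha> + \<beta>) x = act \<alpha> (act \<beta> x)) \<and>
    (\<forall>x\<in>cOb C. \<forall>y\<in>cOb C. \<forall>f\<in>cHom C x y.
        actm 0 f = f \<and> (\<forall>\<alpha> \<beta>. actm (\<alpha> + \<beta>) f = actm \<alpha> (actm \<beta> f)) \<and>
        (\<forall>\<alpha>. actm \<alpha> f \<in> cHom C (act \<alpha> x) (act \<alpha> y))) \<and>
    (\<forall>\<alpha>. \<forall>x\<in>cOb C. actm \<alpha> (cid C x) = cid C (act \<alpha> x)) \<and>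
    (\<forall>\<alpha>. \<forall>x\<in>cOb C. \<forall>y\<in>cOb C. \<forall>z\<in>cOb C. \<forall>f\<in>cHom C x y. \<forall>g\<in>cHom C y z.
        actm \<alpha> (ccmp C g f) = ccmp C (actm \<alpha> g) (actm \<alpha> f)) \<and>
    (\<forall>\<alpha>. \<forall>x\<in>cOb C. \<forall>y\<in>cOb C. \<forall>f\<in>cHom C x y. \<forall>g\<in>cHom C x y. \<forall>c.
        actm \<alpha> (cadd C f g) = cadd C (actm \<alpha> f) (actm \<alpha> g) \<and>
        actm \<alpha> (csmul C c f) = csmul C c (actm \<alpha> f))"

(* A (right) C-module X, i.e. a contravariant k-linear functor C \<rightarrow> Mod k.
  The k-modules X(x) are realised as k-submodules mSp X x of a fixed k-module
  ('v, sc); mMap X f : X(y) \<rightarrow> X(x) for f : x \<rightarrow> y. *)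

record ('o, 'a, 'v) cmod =
  mSp :: "'o \<Rightarrow> 'v set"
  mMap :: "'a \<Rightarrow> 'v \<Rightarrow> 'v"

definition is_mod :: "('o, 'a, 'k::comm_ring_1) kcat \<Rightarrow> ('k \<Rightarrow> 'v::ab_group_add \<Rightarrow> 'v)
    \<Rightarrow> ('o, 'a, 'v) cmod \<Rightarrow> bool" where
  "is_mod C sc X \<longleftrightarrow>
    (\<forall>x\<in>cOb C. 0 \<in> mSp X x \<and>
        (\<forall>v\<in>mSp X x. \<forall>w\<in>mSp X x. v + w \<in> mSp X x) \<and>
        (\<forall>v\<in>mSp X x. - v \<in> mSp X x) \<and>
        (\<forall>c. \<forall>v\<in>mSp X x. sc c v \<in> mSp X x)) \<and>
    (\<forall>x\<in>cOb C. \<forall>y\<in>cOb C. \<forall>f\<in>cHom C x y. \<forall>v\<in>mSp X y. mMap X f v \<in> mSp X x) \<and>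
    (\<forall>x\<in>cOb C. \<forall>y\<in>cOb C. \<forall>f\<in>cHom C x y. \<forall>v\<in>mSp X y. \<forall>w\<in>mSp X y. \<forall>c.
        mMap X f (v + w) = mMap X f v + mMap X f w \<and>
        mMap X f (sc c v) = sc c (mMap X f v)) \<and>
    (\<forall>x\<in>cOb C. \<forall>v\<in>mSp X x. mMap X (cid C x) v = v) \<and>
    (\<forall>x\<in>cOb C. \<forall>y\<in>cOb C. \<forall>z\<in>cOb C. \<forall>f\<in>cHom C x y. \<forall>g\<in>cHom C y z. \<forall>v\<in>mSp X z.
        mMap X (ccmp C g f) v = mMap X f (mMap X g v)) \<and>
    (\<forall>x\<in>cOb C. \<forall>y\<in>cOb C. \<forall>f\<in>cHom C x y. \<forall>g\<in>cHom C x y. \<forall>v\<in>mSp X y. \<forall>c.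
        mMap X (cadd C f g) v = mMap X f v + mMap X g v \<and>
        mMap X (csmul C c f) v = sc c (mMap X f v))"

(* Finitely generated: there is an epimorphism from a finite direct sum of
  representables \<Oplus>\<^sub>i C(-,x_i) onto X. By Yoneda such a morphism is given by elements
  v_i \<in> X(x_i), and it is surjective iff every element of every X(x) is of the
  form \<Sum>\<^sub>i X(f_i)(v_i) with f_i : x \<rightarrow> x_i. *)

definition fg :: "('o, 'a, 'k::comm_ring_1) kcat \<Rightarrow> ('o, 'a, 'v::ab_group_add) cmod \<Rightarrow> bool" where
  "fg C X \<longleftrightarrow> (\<exists>(n::nat) xs vs. (\<forall>i<n. xs i \<in> cOb C \<and> vs i \<in> mSp X (xs i)) \<and>
     (\<forall>x\<in>cOb C. \<forall>w\<in>mSp X x. \<exists>fs. (\<forall>i<n. fs i \<in> cHom C x (xs i)) \<and>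
         w = (\<Sum>i<n. mMap X (fs i) (vs i))))"

definition modR :: "('o, 'a, 'k::comm_ring_1) kcat \<Rightarrow> ('k \<Rightarrow> 'v::ab_group_add \<Rightarrow> 'v)
    \<Rightarrow> ('o, 'a, 'v) cmod \<Rightarrow> bool" where
  "modR C sc X \<longleftrightarrow> is_mod C sc X \<and> fg C X"

(* Morphisms of modules (natural transformations), represented extensionally:
  u x v = 0 whenever x is not an object or v \<notin> X(x). *)

definition modhom :: "('o, 'a, 'k::comm_ring_1) kcat \<Rightarrow> ('k \<Rightarrow> 'v::ab_group_add \<Rightarrow> 'v)
    \<Rightarrow> ('o, 'a, 'v) cmod \<Rightarrow> ('o, 'a, 'v) cmod \<Rightarrow> ('o \<Rightarrow> 'v \<Rightarrow> 'v) set" where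
  "modhom C sc X Y = {u.
     (\<forall>x\<in>cOb C. \<forall>v\<in>mSp X x. u x v \<in> mSp Y x) \<and>
     (\<forall>x\<in>cOb C. \<forall>v\<in>mSp X x. \<forall>w\<in>mSp X x. \<forall>c.
         u x (v + w) = u x v + u x w \<and> u x (sc c v) = sc c (u x v)) \<and>
     (\<forall>x\<in>cOb C. \<forall>y\<in>cOb C. \<forall>f\<in>cHom C x y. \<forall>v\<in>mSp X y.
         u x (mMap X f v) = mMap Y f (u y v)) \<and>
     (\<forall>x v. \<not> (x \<in> cOb C \<and> v \<in> mSp X x) \<longrightarrow> u x v = 0)}"

definition mid :: "'o set \<Rightarrow> ('o, 'a, 'v::zero) cmod \<Rightarrow> 'o \<Rightarrow> 'v \<Rightarrow> 'v" where
  "mid Ob X = (\<lambda>x v. if x \<in> Ob \<and> v \<in> mSp X x then v else 0)"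

definition mcomp :: "'o set \<Rightarrow> ('o, 'a, 'v::zero) cmod \<Rightarrow> ('o \<Rightarrow> 'v \<Rightarrow> 'v)
    \<Rightarrow> ('o \<Rightarrow> 'v \<Rightarrow> 'v) \<Rightarrow> 'o \<Rightarrow> 'v \<Rightarrow> 'v" where
  "mcomp Ob X v u = (\<lambda>x h. if x \<in> Ob \<and> h \<in> mSp X x then v x (u x h) else 0)"

definition gact :: "('g::group_add \<Rightarrow> 'o \<Rightarrow> 'o) \<Rightarrow> ('g \<Rightarrow> 'a \<Rightarrow> 'a) \<Rightarrow> 'g
    \<Rightarrow> ('o, 'a, 'v) cmod \<Rightarrow> ('o, 'a, 'v) cmod" where
  "gact act actm \<alpha> X = \<lparr>mSp = (\<lambda>x. mSp X (act (- \<alpha>) x)), mMap = (\<lambda>f. mMap X (actm (- \<alpha>) f))\<rparr>"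

definition gactm :: "('o, 'a, 'k) kcat \<Rightarrow> ('g::group_add \<Rightarrow> 'o \<Rightarrow> 'o) \<Rightarrow> 'g
    \<Rightarrow> ('o \<Rightarrow> 'v \<Rightarrow> 'v::zero) \<Rightarrow> 'o \<Rightarrow> 'v \<Rightarrow> 'v" where
  "gactm C act \<alpha> u = (\<lambda>x v. if x \<in> cOb C then u (act (- \<alpha>) x) v else 0)"

definition hsum :: "('o, 'a, 'k) kcat \<Rightarrow> 'o \<Rightarrow> 'o \<Rightarrow> ('i \<Rightarrow> 'a) \<Rightarrow> 'i set \<Rightarrow> 'a" where
  "hsum C x y F S = Finite_Set.fold (\<lambda>i acc. cadd C (F i) acc) (czero C x y) S"

definition cdom :: "('o, 'a, 'k) kcat \<Rightarrow> 'a \<Rightarrow> 'o" where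
  "cdom C f = (SOME x. x \<in> cOb C \<and> (\<exists>y\<in>cOb C. f \<in> cHom C x y))"

definition ccod :: "('o, 'a, 'k) kcat \<Rightarrow> 'a \<Rightarrow> 'o" where
  "ccod C f = (SOME y. y \<in> cOb C \<and> (\<exists>x\<in>cOb C. f \<in> cHom C x y))"

(* A morphism f : x \<rightarrow> y of R/G is a family f \<beta> \<alpha> = f_{\<beta>,\<alpha>} \<in> R(\<alpha>x, \<beta>y),
  row- and column-finite, with f_{\<gamma>\<beta>,\<gamma>\<alpha>} = \<gamma>(f_{\<beta>,\<alpha>}).
  (g f)_{\<beta>,\<alpha>} = \<Sum>_\<gamma> g_{\<beta>,\<gamma>} f_{\<gamma>,\<alpha>}; the objects x, y, z are recovered as the
  source/target of the entries f_{1,1} \<in> R(x,y), g_{1,1} \<in> R(y,z). *)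

definition orbit_cat :: "('o, 'a, 'k::comm_ring_1) kcat \<Rightarrow> ('g::group_add \<Rightarrow> 'o \<Rightarrow> 'o)
    \<Rightarrow> ('g \<Rightarrow> 'a \<Rightarrow> 'a) \<Rightarrow> ('o, 'g \<Rightarrow> 'g \<Rightarrow> 'a, 'k) kcat" where
  "orbit_cat C act actm = \<lparr>
     cOb = cOb C,
     cHom = (\<lambda>x y. {f. (\<forall>\<alpha> \<beta>. f \<beta> \<alpha> \<in> cHom C (act \<alpha> x) (act \<beta> y)) \<and>
                       (\<forall>\<alpha>. finite {\<beta>. f \<beta> \<alpha> \<noteq> czero C (act \<alpha> x) (act \<beta> y)}) \<and>
                       (\<forall>\<beta>. finite {\<alpha>. f \<beta> \<alpha> \<noteq> czero C (act \<alpha> x) (act \<beta> y)}) \<and>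
                       (\<forall>\<gamma> \<alpha> \<beta>. f (\<gamma> + \<beta>) (\<gamma> + \<alpha>) = actm \<gamma> (f \<beta> \<alpha>))}),
     ccmp = (\<lambda>g f. let x = cdom C (f 0 0); y = cdom C (g 0 0); z = ccod C (g 0 0) in
               (\<lambda>\<beta> \<alpha>. hsum C (act \<alpha> x) (act \<beta> z) (\<lambda>\<gamma>. ccmp C (g \<beta> \<gamma>) (f \<gamma> \<alpha>))
                          {\<gamma>. f \<gamma> \<alpha> \<noteq> czero C (act \<alpha> x) (act \<gamma> y)})),
     cid = (\<lambda>x. \<lambda>\<beta> \<alpha>. if \<beta> = \<alpha> then cid C (act \<alpha> x) else czero C (act \<alpha> x) (act \<beta> x)),
     czero = (\<lambda>x y. \<lambda>\<beta> \<alpha>. czero C (act \<alpha> x) (act \<beta> y)),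
     cadd = (\<lambda>g f. \<lambda>\<beta> \<alpha>. cadd C (g \<beta> \<alpha>) (f \<beta> \<alpha>)),
     csmul = (\<lambda>c f. \<lambda>\<beta> \<alpha>. csmul C c (f \<beta> \<alpha>)) \<rparr>"

(* (P\<^sub>\<bullet>X)(x) = \<Oplus>\<^sub>\<alpha> X(\<alpha>x), realised as finitely supported functions h with
  h \<alpha> \<in> X(\<alpha>x); (P\<^sub>\<bullet>X)(f) has (\<alpha>,\<beta>)-entry X(f_{\<beta>,\<alpha>}). *)

definition pd :: "('g::group_add \<Rightarrow> 'o \<Rightarrow> 'o) \<Rightarrow> ('o, 'a, 'v::ab_group_add) cmod
    \<Rightarrow> ('o, 'g \<Rightarrow> 'g \<Rightarrow> 'a, 'g \<Rightarrow> 'v) cmod" where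
  "pd act X = \<lparr>
     mSp = (\<lambda>x. {h. (\<forall>\<alpha>. h \<alpha> \<in> mSp X (act \<alpha> x)) \<and> finite {\<alpha>. h \<alpha> \<noteq> 0}}),
     mMap = (\<lambda>f h. \<lambda>\<alpha>. \<Sum>\<beta>\<in>{\<beta>. h \<beta> \<noteq> 0}. mMap X (f \<beta> \<alpha>) (h \<beta>)) \<rparr>"

definition psc :: "('k \<Rightarrow> 'v \<Rightarrow> 'v) \<Rightarrow> 'k \<Rightarrow> ('g \<Rightarrow> 'v) \<Rightarrow> 'g \<Rightarrow> 'v" where
  "psc sc c h = (\<lambda>\<alpha>. sc c (h \<alpha>))"

definition pdm :: "('o, 'a, 'k) kcat \<Rightarrow> ('g::group_add \<Rightarrow> 'o \<Rightarrow> 'o) \<Rightarrow> ('o, 'a, 'v::ab_group_add) cmod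
    \<Rightarrow> ('o \<Rightarrow> 'v \<Rightarrow> 'v) \<Rightarrow> 'o \<Rightarrow> ('g \<Rightarrow> 'v) \<Rightarrow> 'g \<Rightarrow> 'v" where
  "pdm C act X u = (\<lambda>x h. if x \<in> cOb C \<and> h \<in> mSp (pd act X) x
                          then (\<lambda>\<alpha>. u (act \<alpha> x) (h \<alpha>)) else 0)"

definition phi :: "('o, 'a, 'k) kcat \<Rightarrow> ('g::group_add \<Rightarrow> 'o \<Rightarrow> 'o) \<Rightarrow> 'g
    \<Rightarrow> ('o, 'a, 'v::ab_group_add) cmod \<Rightarrow> 'o \<Rightarrow> ('g \<Rightarrow> 'v) \<Rightarrow> 'g \<Rightarrow> 'v" where
  "phi C act \<mu> X = (\<lambda>x h. if x \<in> cOb C \<and> h \<in> mSp (pd act X) x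
                           then (\<lambda>\<beta>. h (- \<mu> + \<beta>)) else 0)"

definition dsum :: "('o, 'a, 'k::comm_ring_1) kcat \<Rightarrow> ('g::group_add \<Rightarrow> 'o \<Rightarrow> 'o)
    \<Rightarrow> ('g \<Rightarrow> 'a \<Rightarrow> 'a) \<Rightarrow> ('k \<Rightarrow> 'v::ab_group_add \<Rightarrow> 'v) \<Rightarrow> ('o, 'a, 'v) cmod
    \<Rightarrow> ('o, 'a, 'v) cmod \<Rightarrow> ('g \<Rightarrow> 'o \<Rightarrow> 'v \<Rightarrow> 'v) set" where
  "dsum C act actm sc X Y = {fam. (\<forall>\<alpha>. fam \<alpha> \<in> modhom C sc (gact act actm \<alpha> X) Y) \<and>
                                  finite {\<alpha>. fam \<alpha> \<noteq> (\<lambda>_ _. 0)}}"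

definition F1 :: "('o, 'a, 'k) kcat \<Rightarrow> ('g::group_add \<Rightarrow> 'o \<Rightarrow> 'o) \<Rightarrow> ('g \<Rightarrow> 'a \<Rightarrow> 'a)
    \<Rightarrow> ('o, 'a, 'v::ab_group_add) cmod \<Rightarrow> ('g \<Rightarrow> 'o \<Rightarrow> 'v \<Rightarrow> 'v) \<Rightarrow> 'o \<Rightarrow> ('g \<Rightarrow> 'v) \<Rightarrow> 'g \<Rightarrow> 'v" where
  "F1 C act actm X fam = (\<lambda>x h. \<Sum>\<alpha>\<in>{\<alpha>. fam \<alpha> \<noteq> (\<lambda>_ _. 0)}.
       mcomp (cOb C) (pd act X) (pdm C act (gact act actm \<alpha> X) (fam \<alpha>)) (phi C act \<alpha> X) x h)"

end

theory Submission imports Defs begin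

lemma sum_cong_supp:
  assumes "finite A" "finite B"
    "\<And>x. x\<in>A \<Longrightarrow> x\<notin>B \<Longrightarrow> f x = 0" "\<And>x. x\<in>B \<Longrightarrow> x\<notin>A \<Longrightarrow> g x = 0"
    "\<And>x. x\<in>A \<Longrightarrow> x\<in>B \<Longrightarrow> f x = g x"
  shows "sum f A = (sum g B :: 'b::comm_monoid_add)"
proof -
  have "sum f A = sum f (A \<inter> B)"
    using assms by (intro sum.mono_neutral_right) auto
  also have "\<dots> = sum g (A \<inter> B)" using assms by (intro sum.cong) auto
  also have "\<dots> = sum g B"
    using assms by (intro sum.mono_neutral_left) auto
  finally show ?thesis .
qed

lemma sum_single:
  assumes "finite S" "\<And>y. y\<in>S \<Longrightarrow> y \<noteq> a \<Longrightarrow> f y = 0" "a \<notin> S \<Longrightarrow> f a = 0"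
  shows "sum f S = (f a :: 'b::comm_monoid_add)"
proof (cases "a \<in> S")
  case True
  then show ?thesis using assms sum.remove[of S a f] by (simp add: sum.neutral)
next
  case False
  then have "\<forall>y\<in>S. f y = 0" using assms by metis
  then show ?thesis using assms False by (simp add: sum.neutral)
qed


lemma sum_fun_apply: "(\<Sum>i\<in>I. f i) a = (\<Sum>i\<in>I. f i a)"
  by (induction I rule: infinite_finite_induct) auto

locale GC =
  fixes R :: "('o, 'a, 'k::comm_ring_1) kcat"
    and act :: "'g::group_add \<Rightarrow> 'o \<Rightarrow> 'o"
    and actm :: "'g \<Rightarrow> 'a \<Rightarrow> 'a"
    and sc :: "'k \<Rightarrow> 'v::ab_group_add \<Rightarrow> 'v"
  assumes G: "Gcat R act actm"
    and M: "module sc"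
begin

lemma K: "kcat R" using G by (simp add: Gcat_def)
lemmas Kp = K[unfolded kcat_def]
lemmas K1 = Kp[THEN conjunct1]
lemmas K2 = Kp[THEN conjunct2, THEN conjunct1]
lemmas K3 = Kp[THEN conjunct2, THEN conjunct2, THEN conjunct1]
lemmas K4 = Kp[THEN conjunct2, THEN conjunct2, THEN conjunct2, THEN conjunct1]
lemmas K5 = Kp[THEN conjunct2, THEN conjunct2, THEN conjunct2, THEN conjunct2, THEN conjunct1]
lemmas K6 = Kp[THEN conjunct2, THEN conjunct2, THEN conjunct2, THEN conjunct2, THEN conjunct2, THEN conjunct1]
lemmas K7 = Kp[THEN conjunct2, THEN conjunct2, THEN conjunct2, THEN conjunct2, THEN conjunct2, THEN conjunct2]

lemma act_ob[simp]: "x \<in> cOb R \<Longrightarrow> act \<alpha> x \<in> cOb R" using G by (simp add: Gcat_def)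
lemma act0[simp]: "x \<in> cOb R \<Longrightarrow> act 0 x = x" using G by (simp add: Gcat_def)
lemma act_add: "x \<in> cOb R \<Longrightarrow> act (\<alpha> + \<beta>) x = act \<alpha> (act \<beta> x)" using G by (simp add: Gcat_def)
lemma act_inv1[simp]: "x \<in> cOb R \<Longrightarrow> act (- \<alpha>) (act \<alpha> x) = x"
  by (metis act0 act_add add.left_inverse)
lemma act_inv2[simp]: "x \<in> cOb R \<Longrightarrow> act \<alpha> (act (- \<alpha>) x) = x"
  by (metis act0 act_add add.right_inverse)

lemma actm0[simp]: "x \<in> cOb R \<Longrightarrow> y \<in> cOb R \<Longrightarrow> f \<in> cHom R x y \<Longrightarrow> actm 0 f = f"
  using G by (simp add: Gcat_def)
lemma actm_add: "x \<in> cOb R \<Longrightarrow> y \<in> cOb R \<Longrightarrow> f \<in> cHom R x y \<Longrightarrow> actm (\<alpha> + \<beta>) f = actm \<alpha> (actm \<beta> f)"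
  using G by (simp add: Gcat_def)
lemma actm_hom: "x \<in> cOb R \<Longrightarrow> y \<in> cOb R \<Longrightarrow> f \<in> cHom R x y \<Longrightarrow> actm \<alpha> f \<in> cHom R (act \<alpha> x) (act \<alpha> y)"
  using G by (simp add: Gcat_def)
lemma actm_id[simp]: "x \<in> cOb R \<Longrightarrow> actm \<alpha> (cid R x) = cid R (act \<alpha> x)"
  using G by (simp add: Gcat_def)
lemma actm_cadd: "x \<in> cOb R \<Longrightarrow> y \<in> cOb R \<Longrightarrow> f \<in> cHom R x y \<Longrightarrow> g \<in> cHom R x y \<Longrightarrow>
   actm \<alpha> (cadd R f g) = cadd R (actm \<alpha> f) (actm \<alpha> g)"
  using G unfolding Gcat_def by blast

lemma hom_unique: "x \<in> cOb R \<Longrightarrow> y \<in> cOb R \<Longrightarrow> x' \<in> cOb R \<Longrightarrow> y' \<in> cOb R \<Longrightarrow>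
   f \<in> cHom R x y \<Longrightarrow> f \<in> cHom R x' y' \<Longrightarrow> x = x' \<and> y = y'"
  using K1 by blast
lemma id_hom: "x \<in> cOb R \<Longrightarrow> cid R x \<in> cHom R x x" using K2 by blast
lemmas K6r = K6[rule_format]
lemma zero_hom: "x \<in> cOb R \<Longrightarrow> y \<in> cOb R \<Longrightarrow> czero R x y \<in> cHom R x y" using K6r by blast
lemma add_hom: "x \<in> cOb R \<Longrightarrow> y \<in> cOb R \<Longrightarrow> f \<in> cHom R x y \<Longrightarrow> g \<in> cHom R x y \<Longrightarrow> cadd R f g \<in> cHom R x y"
  by (rule K6r[THEN conjunct2, THEN conjunct1, rule_format])
lemma add_assoc: "x \<in> cOb R \<Longrightarrow> y \<in> cOb R \<Longrightarrow> f \<in> cHom R x y \<Longrightarrow> g \<in> cHom R x y \<Longrightarrow> h \<in> cHom R x y \<Longrightarrow>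
  cadd R (cadd R f g) h = cadd R f (cadd R g h)"
  by (rule K6r[THEN conjunct2, THEN conjunct2, THEN conjunct2, THEN conjunct1, rule_format])
lemma add_comm: "x \<in> cOb R \<Longrightarrow> y \<in> cOb R \<Longrightarrow> f \<in> cHom R x y \<Longrightarrow> g \<in> cHom R x y \<Longrightarrow> cadd R f g = cadd R g f"
  by (rule K6r[THEN conjunct2, THEN conjunct2, THEN conjunct2, THEN conjunct2, THEN conjunct1, rule_format])
lemma add_zero: "x \<in> cOb R \<Longrightarrow> y \<in> cOb R \<Longrightarrow> f \<in> cHom R x y \<Longrightarrow> cadd R (czero R x y) f = f"
  by (rule K6r[THEN conjunct2, THEN conjunct2, THEN conjunct2, THEN conjunct2, THEN conjunct2, THEN conjunct1, rule_format])
lemma add_neg: "x \<in> cOb R \<Longrightarrow> y \<in> cOb R \<Longrightarrow> f \<in> cHom R x y \<Longrightarrow> \<exists>g\<in>cHom R x y. cadd R f g = czero R x y"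
  by (rule K6r[THEN conjunct2, THEN conjunct2, THEN conjunct2, THEN conjunct2, THEN conjunct2, THEN conjunct2, THEN conjunct1, rule_format])
lemma comp_hom: "x \<in> cOb R \<Longrightarrow> y \<in> cOb R \<Longrightarrow> z \<in> cOb R \<Longrightarrow> f \<in> cHom R x y \<Longrightarrow> g \<in> cHom R y z \<Longrightarrow> ccmp R g f \<in> cHom R x z"
  using K4 by blast

lemma idem_zero:
  assumes "x \<in> cOb R" "y \<in> cOb R" "a \<in> cHom R x y" "cadd R a a = a"
  shows "a = czero R x y"
proof -
  obtain g where g: "g \<in> cHom R x y" "cadd R a g = czero R x y" using add_neg assms by blast
  have "czero R x y = cadd R (cadd R a a) g" using assms g by simp
  also have "\<dots> = cadd R a (cadd R a g)" by (rule add_assoc[OF assms(1,2,3,3) g(1)])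
  also have "\<dots> = cadd R a (czero R x y)" using g by simp
  also have "\<dots> = a" using add_comm add_zero zero_hom assms by metis
  finally show ?thesis by simp
qed

lemma actm_zero[simp]: "x \<in> cOb R \<Longrightarrow> y \<in> cOb R \<Longrightarrow> actm \<alpha> (czero R x y) = czero R (act \<alpha> x) (act \<alpha> y)"
  by (metis act_ob actm_cadd actm_hom add_zero idem_zero zero_hom)

lemma cdom_eq: "x \<in> cOb R \<Longrightarrow> y \<in> cOb R \<Longrightarrow> f \<in> cHom R x y \<Longrightarrow> cdom R f = x"
  unfolding cdom_def by (rule some_equality) (auto dest: hom_unique)
lemma ccod_eq: "x \<in> cOb R \<Longrightarrow> y \<in> cOb R \<Longrightarrow> f \<in> cHom R x y \<Longrightarrow> ccod R f = y"
  unfolding ccod_def by (rule some_equality) (auto dest: hom_unique)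

sublocale module sc by (rule M)

lemma psc_apply[simp]: "psc sc c h \<alpha> = sc c (h \<alpha>)" by (simp add: psc_def)

context
  fixes X assumes X: "is_mod R sc X"
begin
lemmas Xp = X[unfolded is_mod_def]
lemma sp0[simp]: "x \<in> cOb R \<Longrightarrow> 0 \<in> mSp X x"
  using Xp[THEN conjunct1, rule_format] by blast
lemma sp_add: "x \<in> cOb R \<Longrightarrow> v \<in> mSp X x \<Longrightarrow> w \<in> mSp X x \<Longrightarrow> v + w \<in> mSp X x"
  using Xp[THEN conjunct1, rule_format] by blast
lemma sp_neg: "x \<in> cOb R \<Longrightarrow> v \<in> mSp X x \<Longrightarrow> - v \<in> mSp X x"
  using Xp[THEN conjunct1, rule_format] by blast
lemma sp_sc: "x \<in> cOb R \<Longrightarrow> v \<in> mSp X x \<Longrightarrow> sc c v \<in> mSp X x"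
  using Xp[THEN conjunct1, rule_format] by blast
lemma map_sp: "x \<in> cOb R \<Longrightarrow> y \<in> cOb R \<Longrightarrow> f \<in> cHom R x y \<Longrightarrow> v \<in> mSp X y \<Longrightarrow> mMap X f v \<in> mSp X x"
  by (rule Xp[THEN conjunct2, THEN conjunct1, rule_format])
lemma map_add: "x \<in> cOb R \<Longrightarrow> y \<in> cOb R \<Longrightarrow> f \<in> cHom R x y \<Longrightarrow> v \<in> mSp X y \<Longrightarrow> w \<in> mSp X y \<Longrightarrow>
   mMap X f (v + w) = mMap X f v + mMap X f w"
  using Xp[THEN conjunct2, THEN conjunct2, THEN conjunct1, rule_format] by blast
lemma map_sc: "x \<in> cOb R \<Longrightarrow> y \<in> cOb R \<Longrightarrow> f \<in> cHom R x y \<Longrightarrow> v \<in> mSp X y \<Longrightarrow>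
   mMap X f (sc c v) = sc c (mMap X f v)"
  using Xp[THEN conjunct2, THEN conjunct2, THEN conjunct1, rule_format] sp0 by blast
lemma map_id: "x \<in> cOb R \<Longrightarrow> v \<in> mSp X x \<Longrightarrow> mMap X (cid R x) v = v"
  by (rule Xp[THEN conjunct2, THEN conjunct2, THEN conjunct2, THEN conjunct1, rule_format])
lemma map_comp: "x \<in> cOb R \<Longrightarrow> y \<in> cOb R \<Longrightarrow> z \<in> cOb R \<Longrightarrow> f \<in> cHom R x y \<Longrightarrow> g \<in> cHom R y z \<Longrightarrow> v \<in> mSp X z \<Longrightarrow>
   mMap X (ccmp R g f) v = mMap X f (mMap X g v)"
  by (rule Xp[THEN conjunct2, THEN conjunct2, THEN conjunct2, THEN conjunct2, THEN conjunct1, rule_format])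
lemma map_cadd: "x \<in> cOb R \<Longrightarrow> y \<in> cOb R \<Longrightarrow> f \<in> cHom R x y \<Longrightarrow> g \<in> cHom R x y \<Longrightarrow> v \<in> mSp X y \<Longrightarrow>
   mMap X (cadd R f g) v = mMap X f v + mMap X g v"
  using Xp[THEN conjunct2, THEN conjunct2, THEN conjunct2, THEN conjunct2, THEN conjunct2, rule_format] by blast
lemma map_csmul: "x \<in> cOb R \<Longrightarrow> y \<in> cOb R \<Longrightarrow> f \<in> cHom R x y \<Longrightarrow> v \<in> mSp X y \<Longrightarrow>
   mMap X (csmul R c f) v = sc c (mMap X f v)"
  using Xp[THEN conjunct2, THEN conjunct2, THEN conjunct2, THEN conjunct2, THEN conjunct2, rule_format] by blast

lemma map_0[simp]: "x \<in> cOb R \<Longrightarrow> y \<in> cOb R \<Longrightarrow> f \<in> cHom R x y \<Longrightarrow> mMap X f 0 = 0"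
  using map_add[of x y f 0 0] by simp

lemma map_czero[simp]: "x \<in> cOb R \<Longrightarrow> y \<in> cOb R \<Longrightarrow> v \<in> mSp X y \<Longrightarrow> mMap X (czero R x y) v = 0"
  using map_cadd[of x y "czero R x y" "czero R x y" v] add_zero[of x y "czero R x y"] zero_hom by simp

lemma sp_sum: "x \<in> cOb R \<Longrightarrow> (\<And>i. i \<in> I \<Longrightarrow> f i \<in> mSp X x) \<Longrightarrow> sum f I \<in> mSp X x"
  by (induction I rule: infinite_finite_induct) (auto intro: sp_add)

lemma map_sum: "x \<in> cOb R \<Longrightarrow> y \<in> cOb R \<Longrightarrow> g \<in> cHom R x y \<Longrightarrow> (\<And>i. i \<in> I \<Longrightarrow> f i \<in> mSp X y) \<Longrightarrow>
   mMap X g (sum f I) = (\<Sum>i\<in>I. mMap X g (f i))"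
proof (induction I rule: infinite_finite_induct)
  case (insert i F)
  then show ?case by (simp add: map_add sp_sum)
qed auto

lemma sp_diff: "x \<in> cOb R \<Longrightarrow> v \<in> mSp X x \<Longrightarrow> w \<in> mSp X x \<Longrightarrow> v - w \<in> mSp X x"
  using sp_add sp_neg by (metis diff_conv_add_uminus)

end

lemma hsum_hom:
  fixes \<Phi> :: "'a \<Rightarrow> 'b::comm_monoid_add"
  assumes xy: "x \<in> cOb R" "y \<in> cOb R" and A: "finite A" and F: "\<And>i. i \<in> A \<Longrightarrow> F i \<in> cHom R x y"
    and \<Phi>0: "\<Phi> (czero R x y) = 0"
    and \<Phi>add: "\<And>a b. a \<in> cHom R x y \<Longrightarrow> b \<in> cHom R x y \<Longrightarrow> \<Phi> (cadd R a b) = \<Phi> a + \<Phi> b"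
  shows "hsum R x y F A \<in> cHom R x y \<and> \<Phi> (hsum R x y F A) = (\<Sum>i\<in>A. \<Phi> (F i))"
proof -
  define H where "H = cHom R x y"
  define r where "r = (\<lambda>a. if a \<in> H then a else czero R x y)"
  define g where "g = (\<lambda>i acc. cadd R (F i) (r acc))"
  have rH: "r a \<in> H" for a using zero_hom xy by (simp add: r_def H_def)
  have eq: "hsum R x y F A = Finite_Set.fold g (czero R x y) A"
    unfolding hsum_def
    by (rule fold_closed_eq[where B=H]) (auto simp: g_def r_def H_def F add_hom xy zero_hom)
  interpret cf: comp_fun_commute_on A g
  proof
    fix i j assume ij: "i \<in> A" "j \<in> A"
    show "g j \<circ> g i = g i \<circ> g j"
    proof
      fix acc
      have ra: "r acc \<in> cHom R x y" using rH by (simp add: H_def)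
      have "g j (g i acc) = cadd R (F j) (cadd R (F i) (r acc))"
        using ij F ra add_hom xy by (simp add: g_def r_def H_def)
      also have "\<dots> = cadd R (cadd R (F j) (F i)) (r acc)"
        using add_assoc[OF xy F F ra] ij by simp
      also have "\<dots> = cadd R (cadd R (F i) (F j)) (r acc)"
        using add_comm[OF xy F F] ij by simp
      also have "\<dots> = cadd R (F i) (cadd R (F j) (r acc))"
        using add_assoc[OF xy F F ra] ij by simp
      also have "\<dots> = g i (g j acc)"
        using ij F ra add_hom xy by (simp add: g_def r_def H_def)
      finally show "(g j \<circ> g i) acc = (g i \<circ> g j) acc" by simp
    qed
  qed
  have "\<And>B. B \<subseteq> A \<Longrightarrow> Finite_Set.fold g (czero R x y) B \<in> H \<and>
      \<Phi> (Finite_Set.fold g (czero R x y) B) = (\<Sum>i\<in>B. \<Phi> (F i))"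
  proof -
    fix B assume "B \<subseteq> A"
    then have "finite B" using A finite_subset by blast
    then show "?thesis B" using \<open>B \<subseteq> A\<close>
    proof (induction B rule: finite_induct)
      case empty
      then show ?case using \<Phi>0 zero_hom xy by (simp add: H_def)
    next
      case (insert i B)
      have fi: "Finite_Set.fold g (czero R x y) (insert i B) = g i (Finite_Set.fold g (czero R x y) B)"
        using insert by (intro cf.fold_insert) auto
      have IH: "Finite_Set.fold g (czero R x y) B \<in> H" "\<Phi> (Finite_Set.fold g (czero R x y) B) = (\<Sum>i\<in>B. \<Phi> (F i))"
        using insert by auto
      have Fi: "F i \<in> H" using insert F by (auto simp: H_def)
      show ?case unfolding fi using IH Fi insert
        by (auto simp: g_def r_def H_def add_hom xy \<Phi>add)
    qed
  qed
  then show ?thesis using eq by (simp add: H_def)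
qed


section \<open>orbit category and pushdown\<close>

abbreviation OC where "OC \<equiv> orbit_cat R act actm"

lemma OC_ob[simp]: "cOb OC = cOb R" by (simp add: orbit_cat_def)
lemma OC_hom: "f \<in> cHom OC x y \<longleftrightarrow> (\<forall>\<alpha> \<beta>. f \<beta> \<alpha> \<in> cHom R (act \<alpha> x) (act \<beta> y)) \<and>
                       (\<forall>\<alpha>. finite {\<beta>. f \<beta> \<alpha> \<noteq> czero R (act \<alpha> x) (act \<beta> y)}) \<and>
                       (\<forall>\<beta>. finite {\<alpha>. f \<beta> \<alpha> \<noteq> czero R (act \<alpha> x) (act \<beta> y)}) \<and>
                       (\<forall>\<gamma> \<alpha> \<beta>. f (\<gamma> + \<beta>) (\<gamma> + \<alpha>) = actm \<gamma> (f \<beta> \<alpha>))"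
  by (simp add: orbit_cat_def)
lemma OC_entry: "f \<in> cHom OC x y \<Longrightarrow> f \<beta> \<alpha> \<in> cHom R (act \<alpha> x) (act \<beta> y)" by (simp add: OC_hom)
lemma OC_colfin: "f \<in> cHom OC x y \<Longrightarrow> finite {\<beta>. f \<beta> \<alpha> \<noteq> czero R (act \<alpha> x) (act \<beta> y)}" by (simp add: OC_hom)
lemma OC_rowfin: "f \<in> cHom OC x y \<Longrightarrow> finite {\<alpha>. f \<beta> \<alpha> \<noteq> czero R (act \<alpha> x) (act \<beta> y)}" by (simp add: OC_hom)
lemma OC_equiv: "f \<in> cHom OC x y \<Longrightarrow> f (\<gamma> + \<beta>) (\<gamma> + \<alpha>) = actm \<gamma> (f \<beta> \<alpha>)" by (simp add: OC_hom)

lemma pd_sp: "h \<in> mSp (pd act X) x \<longleftrightarrow> (\<forall>\<alpha>. h \<alpha> \<in> mSp X (act \<alpha> x)) \<and> finite {\<alpha>. h \<alpha> \<noteq> 0}"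
  by (simp add: pd_def)
lemma pd_map: "mMap (pd act X) f h = (\<lambda>\<alpha>. \<Sum>\<beta>\<in>{\<beta>. h \<beta> \<noteq> 0}. mMap X (f \<beta> \<alpha>) (h \<beta>))"
  by (simp add: pd_def)

context
  fixes X assumes X: "is_mod R sc X"
begin

lemma oc_map:
  assumes f: "f \<in> cHom OC x y" and xy: "x \<in> cOb R" "y \<in> cOb R"
  shows "mMap X (f \<beta> \<alpha>) 0 = 0"
    "v \<in> mSp X (act \<beta> y) \<Longrightarrow> mMap X (f \<beta> \<alpha>) v \<in> mSp X (act \<alpha> x)"
    "v \<in> mSp X (act \<beta> y) \<Longrightarrow> w \<in> mSp X (act \<beta> y) \<Longrightarrow> mMap X (f \<beta> \<alpha>) (v + w) = mMap X (f \<beta> \<alpha>) v + mMap X (f \<beta> \<alpha>) w"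
    "v \<in> mSp X (act \<beta> y) \<Longrightarrow> mMap X (f \<beta> \<alpha>) (sc c v) = sc c (mMap X (f \<beta> \<alpha>) v)"
    "(\<And>i. i \<in> I \<Longrightarrow> u i \<in> mSp X (act \<beta> y)) \<Longrightarrow> mMap X (f \<beta> \<alpha>) (sum u I) = (\<Sum>i\<in>I. mMap X (f \<beta> \<alpha>) (u i))"
  using map_0[OF X act_ob[OF xy(1)] act_ob[OF xy(2)] OC_entry[OF f]]
    map_sp[OF X act_ob[OF xy(1)] act_ob[OF xy(2)] OC_entry[OF f]]
    map_add[OF X act_ob[OF xy(1)] act_ob[OF xy(2)] OC_entry[OF f]]
    map_sc[OF X act_ob[OF xy(1)] act_ob[OF xy(2)] OC_entry[OF f]]
  by auto (rule map_sum[OF X act_ob[OF xy(1)] act_ob[OF xy(2)] OC_entry[OF f]], blast)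

lemma pd_map_superset:
  assumes xy: "x \<in> cOb R" "y \<in> cOb R" and f: "f \<in> cHom OC x y" and h: "h \<in> mSp (pd act X) y"
    and S: "finite S" "{\<beta>. h \<beta> \<noteq> 0} \<subseteq> S"
  shows "mMap (pd act X) f h \<alpha> = (\<Sum>\<beta>\<in>S. mMap X (f \<beta> \<alpha>) (h \<beta>))"
  unfolding pd_map
  using S by (intro sum.mono_neutral_left) (auto simp: oc_map[OF f xy])

lemma pd_sp_closed:
  assumes x: "x \<in> cOb R"
  shows "0 \<in> mSp (pd act X) x"
    "v \<in> mSp (pd act X) x \<Longrightarrow> w \<in> mSp (pd act X) x \<Longrightarrow> v + w \<in> mSp (pd act X) x"
    "v \<in> mSp (pd act X) x \<Longrightarrow> - v \<in> mSp (pd act X) x"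
    "v \<in> mSp (pd act X) x \<Longrightarrow> psc sc c v \<in> mSp (pd act X) x"
proof -
  show "0 \<in> mSp (pd act X) x" using x X by (simp add: pd_sp)
  show "v \<in> mSp (pd act X) x \<Longrightarrow> w \<in> mSp (pd act X) x \<Longrightarrow> v + w \<in> mSp (pd act X) x"
  proof -
    assume v: "v \<in> mSp (pd act X) x" and w: "w \<in> mSp (pd act X) x"
    have "{\<alpha>. (v + w) \<alpha> \<noteq> 0} \<subseteq> {\<alpha>. v \<alpha> \<noteq> 0} \<union> {\<alpha>. w \<alpha> \<noteq> 0}" by auto
    then show ?thesis using v w x by (auto simp: pd_sp intro: sp_add[OF X] finite_subset)
  qed
  show "v \<in> mSp (pd act X) x \<Longrightarrow> - v \<in> mSp (pd act X) x"
    using x by (auto simp: pd_sp intro: sp_neg[OF X])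
  show "v \<in> mSp (pd act X) x \<Longrightarrow> psc sc c v \<in> mSp (pd act X) x"
  proof -
    assume v: "v \<in> mSp (pd act X) x"
    have "{\<alpha>. sc c (v \<alpha>) \<noteq> 0} \<subseteq> {\<alpha>. v \<alpha> \<noteq> 0}" by auto
    then show ?thesis using v x by (auto simp: pd_sp intro: sp_sc[OF X] finite_subset)
  qed
qed

lemma pd_map_sp:
  assumes xy: "x \<in> cOb R" "y \<in> cOb R" and f: "f \<in> cHom OC x y" and h: "h \<in> mSp (pd act X) y"
  shows "mMap (pd act X) f h \<in> mSp (pd act X) x"
proof -
  have hf: "finite {\<beta>. h \<beta> \<noteq> 0}" and hs: "\<And>\<beta>. h \<beta> \<in> mSp X (act \<beta> y)" using h by (auto simp: pd_sp)
  have "{\<alpha>. mMap (pd act X) f h \<alpha> \<noteq> 0} \<subseteq> (\<Union>\<beta>\<in>{\<beta>. h \<beta> \<noteq> 0}. {\<alpha>. f \<beta> \<alpha> \<noteq> czero R (act \<alpha> x) (act \<beta> y)})"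
  proof
    fix \<alpha> assume "\<alpha> \<in> {\<alpha>. mMap (pd act X) f h \<alpha> \<noteq> 0}"
    then obtain \<beta> where "h \<beta> \<noteq> 0" "mMap X (f \<beta> \<alpha>) (h \<beta>) \<noteq> 0"
      unfolding pd_map by (auto dest: sum.not_neutral_contains_not_neutral)
    then show "\<alpha> \<in> (\<Union>\<beta>\<in>{\<beta>. h \<beta> \<noteq> 0}. {\<alpha>. f \<beta> \<alpha> \<noteq> czero R (act \<alpha> x) (act \<beta> y)})"
      using map_czero[OF X] hs xy by fastforce
  qed
  moreover have "finite (\<Union>\<beta>\<in>{\<beta>. h \<beta> \<noteq> 0}. {\<alpha>. f \<beta> \<alpha> \<noteq> czero R (act \<alpha> x) (act \<beta> y)})"
    using hf OC_rowfin[OF f] by auto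
  ultimately have "finite {\<alpha>. mMap (pd act X) f h \<alpha> \<noteq> 0}" by (rule finite_subset)
  moreover have "mMap (pd act X) f h \<alpha> \<in> mSp X (act \<alpha> x)" for \<alpha>
    unfolding pd_map using xy hs by (auto intro!: sp_sum[OF X] oc_map(2)[OF f xy])
  ultimately show ?thesis by (simp add: pd_sp)
qed

lemma Xe: "f \<in> cHom OC x y \<Longrightarrow> x \<in> cOb R \<Longrightarrow> y \<in> cOb R \<Longrightarrow>
   act \<alpha> x \<in> cOb R \<and> act \<beta> y \<in> cOb R \<and> f \<beta> \<alpha> \<in> cHom R (act \<alpha> x) (act \<beta> y)"
  using OC_entry by simp

lemma pd_map_add:
  assumes xy: "x \<in> cOb R" "y \<in> cOb R" and f: "f \<in> cHom OC x y" and v: "v \<in> mSp (pd act X) y"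
    and w: "w \<in> mSp (pd act X) y"
  shows "mMap (pd act X) f (v + w) = mMap (pd act X) f v + mMap (pd act X) f w"
proof
  fix \<alpha>
  define S where "S = {\<beta>. v \<beta> \<noteq> 0} \<union> {\<beta>. w \<beta> \<noteq> 0}"
  have S: "finite S" using v w by (simp add: S_def pd_sp)
  have vw: "v + w \<in> mSp (pd act X) y" using pd_sp_closed xy v w by blast
  have vs: "\<And>\<beta>. v \<beta> \<in> mSp X (act \<beta> y)" "\<And>\<beta>. w \<beta> \<in> mSp X (act \<beta> y)" using v w by (auto simp: pd_sp)
  have e1: "mMap (pd act X) f (v + w) \<alpha> = (\<Sum>\<beta>\<in>S. mMap X (f \<beta> \<alpha>) ((v + w) \<beta>))"
    by (rule pd_map_superset[OF xy f vw S]) (auto simp: S_def)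
  have e2: "mMap (pd act X) f v \<alpha> = (\<Sum>\<beta>\<in>S. mMap X (f \<beta> \<alpha>) (v \<beta>))"
    by (rule pd_map_superset[OF xy f v S]) (auto simp: S_def)
  have e3: "mMap (pd act X) f w \<alpha> = (\<Sum>\<beta>\<in>S. mMap X (f \<beta> \<alpha>) (w \<beta>))"
    by (rule pd_map_superset[OF xy f w S]) (auto simp: S_def)
  have "(\<Sum>\<beta>\<in>S. mMap X (f \<beta> \<alpha>) ((v + w) \<beta>)) = (\<Sum>\<beta>\<in>S. mMap X (f \<beta> \<alpha>) (v \<beta>) + mMap X (f \<beta> \<alpha>) (w \<beta>))"
  proof (rule sum.cong[OF refl])
    fix \<beta>
    show "mMap X (f \<beta> \<alpha>) ((v + w) \<beta>) = mMap X (f \<beta> \<alpha>) (v \<beta>) + mMap X (f \<beta> \<alpha>) (w \<beta>)"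
      using map_add[OF X, of "act \<alpha> x" "act \<beta> y" "f \<beta> \<alpha>" "v \<beta>" "w \<beta>"] Xe[OF f xy] vs by simp
  qed
  then show "mMap (pd act X) f (v + w) \<alpha> = (mMap (pd act X) f v + mMap (pd act X) f w) \<alpha>"
    using e1 e2 e3 by (simp add: sum.distrib)
qed

lemma pd_map_sc:
  assumes xy: "x \<in> cOb R" "y \<in> cOb R" and f: "f \<in> cHom OC x y" and v: "v \<in> mSp (pd act X) y"
  shows "mMap (pd act X) f (psc sc c v) = psc sc c (mMap (pd act X) f v)"
proof
  fix \<alpha>
  define S where "S = {\<beta>. v \<beta> \<noteq> 0}"
  have S: "finite S" using v by (simp add: S_def pd_sp)
  have cv: "psc sc c v \<in> mSp (pd act X) y" using pd_sp_closed xy v by blast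
  have vs: "\<And>\<beta>. v \<beta> \<in> mSp X (act \<beta> y)" using v by (auto simp: pd_sp)
  have e1: "mMap (pd act X) f (psc sc c v) \<alpha> = (\<Sum>\<beta>\<in>S. mMap X (f \<beta> \<alpha>) (psc sc c v \<beta>))"
    by (rule pd_map_superset[OF xy f cv S]) (auto simp: S_def)
  have e2: "mMap (pd act X) f v \<alpha> = (\<Sum>\<beta>\<in>S. mMap X (f \<beta> \<alpha>) (v \<beta>))"
    by (rule pd_map_superset[OF xy f v S]) (auto simp: S_def)
  have "(\<Sum>\<beta>\<in>S. mMap X (f \<beta> \<alpha>) (psc sc c v \<beta>)) = (\<Sum>\<beta>\<in>S. sc c (mMap X (f \<beta> \<alpha>) (v \<beta>)))"
  proof (rule sum.cong[OF refl])
    fix \<beta>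
    show "mMap X (f \<beta> \<alpha>) (psc sc c v \<beta>) = sc c (mMap X (f \<beta> \<alpha>) (v \<beta>))"
      using map_sc[OF X, of "act \<alpha> x" "act \<beta> y" "f \<beta> \<alpha>" "v \<beta>" c] Xe[OF f xy] vs by simp
  qed
  then show "mMap (pd act X) f (psc sc c v) \<alpha> = psc sc c (mMap (pd act X) f v) \<alpha>"
    using e1 e2 by (simp add: scale_sum_right)
qed

lemma pd_map_id:
  assumes x: "x \<in> cOb R" and v: "v \<in> mSp (pd act X) x"
  shows "mMap (pd act X) (cid OC x) v = v"
proof
  fix \<alpha>
  have vs: "\<And>\<beta>. v \<beta> \<in> mSp X (act \<beta> x)" and vf: "finite {\<beta>. v \<beta> \<noteq> 0}" using v by (auto simp: pd_sp)
  have "mMap (pd act X) (cid OC x) v \<alpha> =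
     (\<Sum>\<beta>\<in>{\<beta>. v \<beta> \<noteq> 0}. mMap X (if \<beta> = \<alpha> then cid R (act \<alpha> x) else czero R (act \<alpha> x) (act \<beta> x)) (v \<beta>))"
    unfolding pd_map by (simp add: orbit_cat_def)
  also have "\<dots> = mMap X (cid R (act \<alpha> x)) (v \<alpha>)"
  proof -
    define F where "F = (\<lambda>\<beta>. mMap X (if \<beta> = \<alpha> then cid R (act \<alpha> x) else czero R (act \<alpha> x) (act \<beta> x)) (v \<beta>))"
    have "sum F {\<beta>. v \<beta> \<noteq> 0} = F \<alpha>"
      by (rule sum_single[OF vf]) (auto simp: F_def map_czero[OF X] vs x map_0[OF X _ _ id_hom])
    then show ?thesis by (simp add: F_def)
  qed
  also have "\<dots> = v \<alpha>" using map_id[OF X] vs x by simp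
  finally show "mMap (pd act X) (cid OC x) v \<alpha> = v \<alpha>" .
qed

lemma pd_map_cadd:
  assumes xy: "x \<in> cOb R" "y \<in> cOb R" and f: "f \<in> cHom OC x y" and g: "g \<in> cHom OC x y"
    and v: "v \<in> mSp (pd act X) y"
  shows "mMap (pd act X) (cadd OC f g) v = mMap (pd act X) f v + mMap (pd act X) g v"
proof
  fix \<alpha>
  have vs: "\<And>\<beta>. v \<beta> \<in> mSp X (act \<beta> y)" using v by (auto simp: pd_sp)
  have "(\<Sum>\<beta>\<in>{\<beta>. v \<beta> \<noteq> 0}. mMap X (cadd R (f \<beta> \<alpha>) (g \<beta> \<alpha>)) (v \<beta>)) =
        (\<Sum>\<beta>\<in>{\<beta>. v \<beta> \<noteq> 0}. mMap X (f \<beta> \<alpha>) (v \<beta>) + mMap X (g \<beta> \<alpha>) (v \<beta>))"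
  proof (rule sum.cong[OF refl])
    fix \<beta>
    show "mMap X (cadd R (f \<beta> \<alpha>) (g \<beta> \<alpha>)) (v \<beta>) = mMap X (f \<beta> \<alpha>) (v \<beta>) + mMap X (g \<beta> \<alpha>) (v \<beta>)"
      using map_cadd[OF X, of "act \<alpha> x" "act \<beta> y" "f \<beta> \<alpha>" "g \<beta> \<alpha>" "v \<beta>"] Xe[OF f xy] Xe[OF g xy] vs by simp
  qed
  then show "mMap (pd act X) (cadd OC f g) v \<alpha> = (mMap (pd act X) f v + mMap (pd act X) g v) \<alpha>"
    unfolding pd_map by (simp add: orbit_cat_def sum.distrib)
qed

lemma pd_map_csmul:
  assumes xy: "x \<in> cOb R" "y \<in> cOb R" and f: "f \<in> cHom OC x y"
    and v: "v \<in> mSp (pd act X) y"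
  shows "mMap (pd act X) (csmul OC c f) v = psc sc c (mMap (pd act X) f v)"
proof
  fix \<alpha>
  have vs: "\<And>\<beta>. v \<beta> \<in> mSp X (act \<beta> y)" using v by (auto simp: pd_sp)
  have "(\<Sum>\<beta>\<in>{\<beta>. v \<beta> \<noteq> 0}. mMap X (csmul R c (f \<beta> \<alpha>)) (v \<beta>)) =
        (\<Sum>\<beta>\<in>{\<beta>. v \<beta> \<noteq> 0}. sc c (mMap X (f \<beta> \<alpha>) (v \<beta>)))"
  proof (rule sum.cong[OF refl])
    fix \<beta>
    show "mMap X (csmul R c (f \<beta> \<alpha>)) (v \<beta>) = sc c (mMap X (f \<beta> \<alpha>) (v \<beta>))"
      using map_csmul[OF X, of "act \<alpha> x" "act \<beta> y" "f \<beta> \<alpha>" "v \<beta>" c] Xe[OF f xy] vs by simp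
  qed
  then show "mMap (pd act X) (csmul OC c f) v \<alpha> = psc sc c (mMap (pd act X) f v) \<alpha>"
    unfolding pd_map by (simp add: orbit_cat_def scale_sum_right)
qed

lemma OC_ccmp:
  assumes xyz: "x \<in> cOb R" "y \<in> cOb R" "z \<in> cOb R" and f: "f \<in> cHom OC x y" and g: "g \<in> cHom OC y z"
  shows "ccmp OC g f = (\<lambda>\<beta> \<alpha>. hsum R (act \<alpha> x) (act \<beta> z) (\<lambda>\<gamma>. ccmp R (g \<beta> \<gamma>) (f \<gamma> \<alpha>))
                          {\<gamma>. f \<gamma> \<alpha> \<noteq> czero R (act \<alpha> x) (act \<gamma> y)})"
proof -
  have "cdom R (f 0 0) = x" using OC_entry[OF f, of 0 0] xyz by (simp add: cdom_eq)
  moreover have "cdom R (g 0 0) = y" using OC_entry[OF g, of 0 0] xyz by (simp add: cdom_eq)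
  moreover have "ccod R (g 0 0) = z" using OC_entry[OF g, of 0 0] xyz by (simp add: ccod_eq)
  ultimately show ?thesis by (simp add: orbit_cat_def Let_def)
qed

lemma pd_map_comp:
  assumes xyz: "x \<in> cOb R" "y \<in> cOb R" "z \<in> cOb R" and f: "f \<in> cHom OC x y" and g: "g \<in> cHom OC y z"
    and v: "v \<in> mSp (pd act X) z"
  shows "mMap (pd act X) (ccmp OC g f) v = mMap (pd act X) f (mMap (pd act X) g v)"
proof
  fix \<alpha>
  define \<Gamma> where "\<Gamma> = {\<gamma>. f \<gamma> \<alpha> \<noteq> czero R (act \<alpha> x) (act \<gamma> y)}"
  have \<Gamma>: "finite \<Gamma>" using OC_colfin[OF f] by (simp add: \<Gamma>_def)
  have vs: "\<And>\<beta>. v \<beta> \<in> mSp X (act \<beta> z)" and vf: "finite {\<beta>. v \<beta> \<noteq> 0}" using v by (auto simp: pd_sp)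
  define w where "w = mMap (pd act X) g v"
  have w: "w \<in> mSp (pd act X) y" using pd_map_sp[OF xyz(2,3) g v] by (simp add: w_def)
  have ws: "\<And>\<gamma>. w \<gamma> \<in> mSp X (act \<gamma> y)" and wf: "finite {\<gamma>. w \<gamma> \<noteq> 0}" using w by (auto simp: pd_sp)
  have "mMap (pd act X) (ccmp OC g f) v \<alpha> =
     (\<Sum>\<beta>\<in>{\<beta>. v \<beta> \<noteq> 0}. \<Sum>\<gamma>\<in>\<Gamma>. mMap X (ccmp R (g \<beta> \<gamma>) (f \<gamma> \<alpha>)) (v \<beta>))"
    unfolding pd_map OC_ccmp[OF xyz f g] \<Gamma>_def[symmetric]
  proof (rule sum.cong[OF refl])
    fix \<beta>
    have "hsum R (act \<alpha> x) (act \<beta> z) (\<lambda>\<gamma>. ccmp R (g \<beta> \<gamma>) (f \<gamma> \<alpha>)) \<Gamma> \<in> cHom R (act \<alpha> x) (act \<beta> z) \<and>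
       mMap X (hsum R (act \<alpha> x) (act \<beta> z) (\<lambda>\<gamma>. ccmp R (g \<beta> \<gamma>) (f \<gamma> \<alpha>)) \<Gamma>) (v \<beta>) =
         (\<Sum>\<gamma>\<in>\<Gamma>. mMap X (ccmp R (g \<beta> \<gamma>) (f \<gamma> \<alpha>)) (v \<beta>))"
    proof (rule hsum_hom)
      show "act \<alpha> x \<in> cOb R" "act \<beta> z \<in> cOb R" "finite \<Gamma>" using xyz \<Gamma> by auto
      show "ccmp R (g \<beta> i) (f i \<alpha>) \<in> cHom R (act \<alpha> x) (act \<beta> z)" for i
        by (rule comp_hom[of _ "act i y"]) (auto simp: xyz OC_entry[OF f] OC_entry[OF g])
      show "mMap X (czero R (act \<alpha> x) (act \<beta> z)) (v \<beta>) = 0" using map_czero[OF X] xyz vs by simp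
      show "mMap X (cadd R a b) (v \<beta>) = mMap X a (v \<beta>) + mMap X b (v \<beta>)"
        if "a \<in> cHom R (act \<alpha> x) (act \<beta> z)" "b \<in> cHom R (act \<alpha> x) (act \<beta> z)" for a b
        using map_cadd[OF X _ _ that vs] xyz by simp
    qed
    then show "mMap X (hsum R (act \<alpha> x) (act \<beta> z) (\<lambda>\<gamma>. ccmp R (g \<beta> \<gamma>) (f \<gamma> \<alpha>)) \<Gamma>) (v \<beta>) =
         (\<Sum>\<gamma>\<in>\<Gamma>. mMap X (ccmp R (g \<beta> \<gamma>) (f \<gamma> \<alpha>)) (v \<beta>))" by simp
  qed
  also have "\<dots> = (\<Sum>\<beta>\<in>{\<beta>. v \<beta> \<noteq> 0}. \<Sum>\<gamma>\<in>\<Gamma>. mMap X (f \<gamma> \<alpha>) (mMap X (g \<beta> \<gamma>) (v \<beta>)))"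
    by (intro sum.cong refl map_comp[OF X act_ob[OF xyz(1)] act_ob[OF xyz(2)] act_ob[OF xyz(3)] OC_entry[OF f] OC_entry[OF g] vs])
  also have "\<dots> = (\<Sum>\<gamma>\<in>\<Gamma>. \<Sum>\<beta>\<in>{\<beta>. v \<beta> \<noteq> 0}. mMap X (f \<gamma> \<alpha>) (mMap X (g \<beta> \<gamma>) (v \<beta>)))"
    by (rule sum.swap)
  also have "\<dots> = (\<Sum>\<gamma>\<in>\<Gamma>. mMap X (f \<gamma> \<alpha>) (w \<gamma>))"
    unfolding w_def pd_map
    by (rule sum.cong[OF refl], rule oc_map(5)[OF f xyz(1,2), symmetric], rule oc_map(2)[OF g xyz(2,3) vs])
  also have "\<dots> = (\<Sum>\<gamma>\<in>{\<gamma>. w \<gamma> \<noteq> 0}. mMap X (f \<gamma> \<alpha>) (w \<gamma>))"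
    using \<Gamma> wf xyz ws OC_entry[OF f]
    by (intro sum_cong_supp) (auto simp: \<Gamma>_def map_czero[OF X] oc_map(1)[OF f xyz(1,2)])
  also have "\<dots> = mMap (pd act X) f w \<alpha>" by (simp add: pd_map)
  finally show "mMap (pd act X) (ccmp OC g f) v \<alpha> = mMap (pd act X) f (mMap (pd act X) g v) \<alpha>"
    by (simp add: w_def)
qed

lemma pd_is_mod: "is_mod OC (psc sc) (pd act X)"
  unfolding is_mod_def OC_ob
  apply (intro conjI)
  subgoal using pd_sp_closed by blast
  subgoal by (intro ballI) (rule pd_map_sp; assumption)
  subgoal by (intro ballI allI conjI) (rule pd_map_add pd_map_sc; assumption)+
  subgoal by (intro ballI allI conjI) (rule pd_map_id; assumption)
  subgoal by (intro ballI allI conjI) (rule pd_map_comp; assumption)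
  subgoal by (intro ballI allI conjI) (rule pd_map_cadd pd_map_csmul; assumption)+
  done

end

lemma grp1: "(\<beta>::'g) + (- \<beta> + \<alpha>) = \<alpha>" by (simp add: add.assoc[symmetric])
lemma grp2: "- ((\<gamma>::'g) + \<beta>) + (\<gamma> + \<alpha>) = - \<beta> + \<alpha>" by (metis add.assoc minus_add minus_add_cancel)

lemma act_grp1[simp]: "x \<in> cOb R \<Longrightarrow> act \<beta> (act (- \<beta> + \<alpha>) x) = act \<alpha> x"
  by (metis act_add grp1)

definition Ext :: "('g \<Rightarrow> 'a) \<Rightarrow> 'g \<Rightarrow> 'g \<Rightarrow> 'a" where
  "Ext F = (\<lambda>\<beta> \<alpha>. actm \<beta> (F (- \<beta> + \<alpha>)))"

lemma Ext_hom:
  assumes xy: "x \<in> cOb R" "y \<in> cOb R" and F: "\<And>\<alpha>. F \<alpha> \<in> cHom R (act \<alpha> x) y"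
    and fin: "finite {\<alpha>. F \<alpha> \<noteq> czero R (act \<alpha> x) y}"
  shows "Ext F \<in> cHom OC x y"
  unfolding OC_hom
proof (intro conjI allI)
  fix \<alpha> \<beta>
  show "Ext F \<beta> \<alpha> \<in> cHom R (act \<alpha> x) (act \<beta> y)"
    using actm_hom[OF act_ob[OF xy(1)] xy(2) F[of "- \<beta> + \<alpha>"], of \<beta>] xy by (simp add: Ext_def)
next
  fix \<alpha>
  let ?S = "{\<alpha>. F \<alpha> \<noteq> czero R (act \<alpha> x) y}"
  have "{\<beta>. Ext F \<beta> \<alpha> \<noteq> czero R (act \<alpha> x) (act \<beta> y)} \<subseteq> (\<lambda>s. \<alpha> + - s) ` ?S"
  proof
    fix \<beta> assume b: "\<beta> \<in> {\<beta>. Ext F \<beta> \<alpha> \<noteq> czero R (act \<alpha> x) (act \<beta> y)}"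
    have "- \<beta> + \<alpha> \<in> ?S"
    proof (rule ccontr)
      assume "- \<beta> + \<alpha> \<notin> ?S"
      then have "F (- \<beta> + \<alpha>) = czero R (act (- \<beta> + \<alpha>) x) y" by simp
      then have "Ext F \<beta> \<alpha> = czero R (act \<alpha> x) (act \<beta> y)" using xy by (simp add: Ext_def)
      then show False using b by simp
    qed
    moreover have "\<beta> = \<alpha> + - (- \<beta> + \<alpha>)" by (simp add: minus_add add.assoc)
    ultimately show "\<beta> \<in> (\<lambda>s. \<alpha> + - s) ` ?S" by blast
  qed
  then show "finite {\<beta>. Ext F \<beta> \<alpha> \<noteq> czero R (act \<alpha> x) (act \<beta> y)}"
    using fin finite_subset by blast
next
  fix \<beta>
  let ?S = "{\<alpha>. F \<alpha> \<noteq> czero R (act \<alpha> x) y}"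
  have "{\<alpha>. Ext F \<beta> \<alpha> \<noteq> czero R (act \<alpha> x) (act \<beta> y)} \<subseteq> (\<lambda>s. \<beta> + s) ` ?S"
  proof
    fix \<alpha> assume b: "\<alpha> \<in> {\<alpha>. Ext F \<beta> \<alpha> \<noteq> czero R (act \<alpha> x) (act \<beta> y)}"
    have "- \<beta> + \<alpha> \<in> ?S"
    proof (rule ccontr)
      assume "- \<beta> + \<alpha> \<notin> ?S"
      then have "F (- \<beta> + \<alpha>) = czero R (act (- \<beta> + \<alpha>) x) y" by simp
      then have "Ext F \<beta> \<alpha> = czero R (act \<alpha> x) (act \<beta> y)" using xy by (simp add: Ext_def)
      then show False using b by simp
    qed
    moreover have "\<alpha> = \<beta> + (- \<beta> + \<alpha>)" by (simp add: grp1)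
    ultimately show "\<alpha> \<in> (\<lambda>s. \<beta> + s) ` ?S" by blast
  qed
  then show "finite {\<alpha>. Ext F \<beta> \<alpha> \<noteq> czero R (act \<alpha> x) (act \<beta> y)}"
    using fin finite_subset by blast
next
  fix \<gamma> \<alpha> \<beta>
  show "Ext F (\<gamma> + \<beta>) (\<gamma> + \<alpha>) = actm \<gamma> (Ext F \<beta> \<alpha>)"
    unfolding Ext_def grp2 using actm_add[OF act_ob[OF xy(1)] xy(2) F] by simp
qed

lemma Ext_00: "x \<in> cOb R \<Longrightarrow> y \<in> cOb R \<Longrightarrow> F \<alpha> \<in> cHom R (act \<alpha> x) y \<Longrightarrow> Ext F 0 \<alpha> = F \<alpha>"
  using actm0[OF act_ob[of x \<alpha>], of y "F \<alpha>"] by (simp add: Ext_def)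

definition dlt :: "'v \<Rightarrow> 'g \<Rightarrow> 'v" where "dlt v = (\<lambda>\<gamma>. if \<gamma> = 0 then v else 0)"

context
  fixes X assumes X: "is_mod R sc X"
begin

lemma dlt_sp: "a \<in> cOb R \<Longrightarrow> v \<in> mSp X a \<Longrightarrow> dlt v \<in> mSp (pd act X) a"
proof -
  assume a: "a \<in> cOb R" and v: "v \<in> mSp X a"
  have "{\<alpha>. dlt v \<alpha> \<noteq> 0} \<subseteq> {0}" by (auto simp: dlt_def)
  then show ?thesis using a v sp0[OF X] by (auto simp: pd_sp dlt_def intro: finite_subset)
qed

lemma pd_map_dlt:
  assumes xa: "x \<in> cOb R" "a \<in> cOb R" and f: "f \<in> cHom OC x a" and v: "v \<in> mSp X a"
  shows "mMap (pd act X) f (dlt v) \<alpha> = mMap X (f 0 \<alpha>) v"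
proof -
  have "mMap (pd act X) f (dlt v) \<alpha> = (\<Sum>\<beta>\<in>{0}. mMap X (f \<beta> \<alpha>) (dlt v \<beta>))"
    by (rule pd_map_superset[OF X xa f dlt_sp[OF xa(2) v]]) (auto simp: dlt_def)
  then show ?thesis by (simp add: dlt_def)
qed

lemma pd_fg: assumes fgX: "fg R X" shows "fg OC (pd act X)"
proof -
  obtain n :: nat and xs vs where gen: "\<forall>i<n. xs i \<in> cOb R \<and> vs i \<in> mSp X (xs i)"
    and span: "\<forall>x\<in>cOb R. \<forall>w\<in>mSp X x. \<exists>fs. (\<forall>i<n. fs i \<in> cHom R x (xs i)) \<and>
         w = (\<Sum>i<n. mMap X (fs i) (vs i))"
    using fgX unfolding fg_def by blast
  show ?thesis unfolding fg_def OC_ob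
  proof (rule exI[of _ n], rule exI[of _ xs], rule exI[of _ "\<lambda>i. dlt (vs i)"], intro conjI ballI)
    show "\<forall>i<n. xs i \<in> cOb R \<and> dlt (vs i) \<in> mSp (pd act X) (xs i)" using gen dlt_sp by blast
    fix x w assume x: "x \<in> cOb R" and w: "w \<in> mSp (pd act X) x"
    have ws: "\<And>\<alpha>. w \<alpha> \<in> mSp X (act \<alpha> x)" using w by (simp add: pd_sp)
    have "\<forall>\<alpha>. \<exists>fs. (\<forall>i<n. fs i \<in> cHom R (act \<alpha> x) (xs i)) \<and> w \<alpha> = (\<Sum>i<n. mMap X (fs i) (vs i))"
      using span ws x by auto
    then obtain FS where FS: "\<And>\<alpha>. (\<forall>i<n. FS \<alpha> i \<in> cHom R (act \<alpha> x) (xs i)) \<and>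
          w \<alpha> = (\<Sum>i<n. mMap X (FS \<alpha> i) (vs i))" by metis
    define S where "S = {\<alpha>. w \<alpha> \<noteq> 0}"
    have S: "finite S" using w by (simp add: pd_sp S_def)
    define F where "F i \<alpha> = (if \<alpha> \<in> S then FS \<alpha> i else czero R (act \<alpha> x) (xs i))" for i \<alpha>
    have Fh: "F i \<alpha> \<in> cHom R (act \<alpha> x) (xs i)" if "i < n" for i \<alpha>
      using FS that gen x zero_hom by (simp add: F_def)
    have Ffin: "finite {\<alpha>. F i \<alpha> \<noteq> czero R (act \<alpha> x) (xs i)}" for i
      using S by (rule finite_subset[rotated]) (auto simp: F_def)
    have A: "\<forall>i<n. Ext (F i) \<in> cHom OC x (xs i)"
    proof (intro allI impI)
      fix i assume i: "i < n"
      show "Ext (F i) \<in> cHom OC x (xs i)"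
        by (rule Ext_hom[OF x]) (use gen i Fh[OF i] Ffin in auto)
    qed
    have B: "w = (\<Sum>i<n. mMap (pd act X) (Ext (F i)) (dlt (vs i)))"
      proof
        fix \<alpha>
        have "(\<Sum>i<n. mMap (pd act X) (Ext (F i)) (dlt (vs i))) \<alpha> = (\<Sum>i<n. mMap X (F i \<alpha>) (vs i))"
          unfolding sum_fun_apply
        proof (rule sum.cong[OF refl])
          fix i assume "i \<in> {..<n}"
          then have i: "i < n" by simp
          have E: "Ext (F i) \<in> cHom OC x (xs i)" using A i by blast
          show "mMap (pd act X) (Ext (F i)) (dlt (vs i)) \<alpha> = mMap X (F i \<alpha>) (vs i)"
            using pd_map_dlt[OF x _ E, of "vs i" \<alpha>] gen i Ext_00[of x "xs i" "F i" \<alpha>] x Fh[OF i] by simp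
        qed
        also have "\<dots> = w \<alpha>"
        proof (cases "\<alpha> \<in> S")
          case True
          then show ?thesis using FS by (simp add: F_def)
        next
          case False
          then have "w \<alpha> = 0" by (simp add: S_def)
          then show ?thesis using False gen x map_czero[OF X] by (simp add: F_def)
        qed
        finally show "w \<alpha> = (\<Sum>i<n. mMap (pd act X) (Ext (F i)) (dlt (vs i))) \<alpha>" by simp
      qed
    show "\<exists>fs. (\<forall>i<n. fs i \<in> cHom OC x (xs i)) \<and> w = (\<Sum>i<n. mMap (pd act X) (fs i) (dlt (vs i)))"
      by (rule exI[of _ "\<lambda>i. Ext (F i)"]) (use A B in simp)
  qed
qed

lemma pd_modR: "modR R sc X \<Longrightarrow> modR OC (psc sc) (pd act X)"
  unfolding modR_def using pd_is_mod pd_fg by blast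

end

lemma gact_sp[simp]: "mSp (gact act actm \<mu> X) y = mSp X (act (- \<mu>) y)" by (simp add: gact_def)
lemma gact_map[simp]: "mMap (gact act actm \<mu> X) f = mMap X (actm (- \<mu>) f)" by (simp add: gact_def)

lemma act_neg_add: "x \<in> cOb R \<Longrightarrow> act (- \<mu>) (act \<beta> x) = act (- \<mu> + \<beta>) x"
  by (simp add: act_add)

lemma actm_comp: "x \<in> cOb R \<Longrightarrow> y \<in> cOb R \<Longrightarrow> z \<in> cOb R \<Longrightarrow> f \<in> cHom R x y \<Longrightarrow> g \<in> cHom R y z \<Longrightarrow>
   actm \<alpha> (ccmp R g f) = ccmp R (actm \<alpha> g) (actm \<alpha> f)"
  using G unfolding Gcat_def by blast
lemma actm_csmul: "x \<in> cOb R \<Longrightarrow> y \<in> cOb R \<Longrightarrow> f \<in> cHom R x y \<Longrightarrow>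
   actm \<alpha> (csmul R c f) = csmul R c (actm \<alpha> f)"
proof -
  assume a: "x \<in> cOb R" "y \<in> cOb R" "f \<in> cHom R x y"
  have "\<forall>\<alpha>. \<forall>x\<in>cOb R. \<forall>y\<in>cOb R. \<forall>f\<in>cHom R x y. \<forall>g\<in>cHom R x y. \<forall>c.
        actm \<alpha> (cadd R f g) = cadd R (actm \<alpha> f) (actm \<alpha> g) \<and>
        actm \<alpha> (csmul R c f) = csmul R c (actm \<alpha> f)"
    using G unfolding Gcat_def by (elim conjE) assumption
  then show ?thesis using a by blast
qed

lemma gact_is_mod:
  assumes X: "is_mod R sc X"
  shows "is_mod R sc (gact act actm \<mu> X)"
  unfolding is_mod_def gact_sp gact_map
  apply (intro conjI)
  subgoal using sp0[OF X] sp_add[OF X] sp_neg[OF X] sp_sc[OF X] by simp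
  subgoal by (intro ballI) (rule map_sp[OF X]; simp add: actm_hom)
  subgoal apply (intro ballI allI conjI)
     apply (rule map_add[OF X act_ob act_ob actm_hom]; assumption)
    apply (rule map_sc[OF X act_ob act_ob actm_hom]; assumption)
    done
  subgoal by (intro ballI allI conjI) (simp add: map_id[OF X])
  subgoal proof (intro ballI allI)
    fix x y z f g v assume a: "x \<in> cOb R" "y \<in> cOb R" "z \<in> cOb R" "f \<in> cHom R x y" "g \<in> cHom R y z"
      "v \<in> mSp X (act (- \<mu>) z)"
    show "mMap X (actm (- \<mu>) (ccmp R g f)) v = mMap X (actm (- \<mu>) f) (mMap X (actm (- \<mu>) g) v)"
      using actm_comp[OF a(1-5)] map_comp[OF X act_ob[OF a(1)] act_ob[OF a(2)] act_ob[OF a(3)]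
          actm_hom[OF a(1,2,4)] actm_hom[OF a(2,3,5)] a(6)] by simp
  qed
  subgoal proof (intro ballI allI conjI)
    fix x y f g v c assume a: "x \<in> cOb R" "y \<in> cOb R" "f \<in> cHom R x y" "g \<in> cHom R x y"
      "v \<in> mSp X (act (- \<mu>) y)"
    show "mMap X (actm (- \<mu>) (cadd R f g)) v = mMap X (actm (- \<mu>) f) v + mMap X (actm (- \<mu>) g) v"
      using actm_cadd[OF a(1-4)] map_cadd[OF X act_ob[OF a(1)] act_ob[OF a(2)]
          actm_hom[OF a(1,2,3)] actm_hom[OF a(1,2,4)] a(5)] by simp
    show "mMap X (actm (- \<mu>) (csmul R c f)) v = sc c (mMap X (actm (- \<mu>) f) v)"
      using actm_csmul[OF a(1-3)] map_csmul[OF X act_ob[OF a(1)] act_ob[OF a(2)]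
          actm_hom[OF a(1,2,3)] a(5)] by simp
  qed
  done

lemma phi_apply: "x \<in> cOb R \<Longrightarrow> h \<in> mSp (pd act X) x \<Longrightarrow> phi R act \<mu> X x h = (\<lambda>\<beta>. h (- \<mu> + \<beta>))"
  by (simp add: phi_def)
lemma phi_out: assumes "\<not> (x \<in> cOb R \<and> h \<in> mSp (pd act X) x)" shows "phi R act \<mu> X x h = 0"
  using assms unfolding phi_def by auto

lemma supp_shift: fixes h :: "'g \<Rightarrow> 'b::zero" shows "{\<beta>. h (- \<mu> + \<beta>) \<noteq> 0} = (\<lambda>\<alpha>. \<mu> + \<alpha>) ` {\<alpha>. h \<alpha> \<noteq> 0}"
proof -
  have "\<beta> = \<mu> + (- \<mu> + \<beta>)" for \<beta> :: 'g by (simp add: add.assoc[symmetric])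
  then show ?thesis by force
qed

lemma phi_sp_gen:
  assumes x: "x \<in> cOb R" and h: "h \<in> mSp (pd act Z) x"
    and wsp: "\<And>a. a \<in> cOb R \<Longrightarrow> mSp W a = mSp Z (act (- \<mu>) a)"
  shows "(\<lambda>\<beta>. h (- \<mu> + \<beta>)) \<in> mSp (pd act W) x"
  using h x by (simp add: pd_sp supp_shift wsp act_neg_add)

lemma phi_modhom_gen:
  assumes Z: "is_mod R sc Z"
    and wsp: "\<And>a. a \<in> cOb R \<Longrightarrow> mSp W a = mSp Z (act (- \<mu>) a)"
    and wmap: "\<And>a b g. a \<in> cOb R \<Longrightarrow> b \<in> cOb R \<Longrightarrow> g \<in> cHom R a b \<Longrightarrow> mMap W g = mMap Z (actm (- \<mu>) g)"
  shows "phi R act \<mu> Z \<in> modhom OC (psc sc) (pd act Z) (pd act W)"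
  unfolding modhom_def OC_ob
proof (intro CollectI conjI ballI allI impI)
  fix x h assume x: "x \<in> cOb R" and h: "h \<in> mSp (pd act Z) x"
  show "phi R act \<mu> Z x h \<in> mSp (pd act W) x"
    using phi_sp_gen[OF x h wsp] phi_apply[OF x h] by simp
next
  fix x v w c assume x: "x \<in> cOb R" and v: "v \<in> mSp (pd act Z) x" and w: "w \<in> mSp (pd act Z) x"
  have vw: "v + w \<in> mSp (pd act Z) x" "psc sc c v \<in> mSp (pd act Z) x"
    using pd_sp_closed[OF Z x] v w by auto
  show "phi R act \<mu> Z x (v + w) = phi R act \<mu> Z x v + phi R act \<mu> Z x w"
    using phi_apply[OF x v] phi_apply[OF x w] phi_apply[OF x vw(1)] by (simp add: fun_eq_iff)
  show "phi R act \<mu> Z x (psc sc c v) = psc sc c (phi R act \<mu> Z x v)"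
    using phi_apply[OF x v] phi_apply[OF x vw(2)] by (simp add: fun_eq_iff psc_def)
next
  fix x y f h assume x: "x \<in> cOb R" and y: "y \<in> cOb R" and f: "f \<in> cHom OC x y" and h: "h \<in> mSp (pd act Z) y"
  have fh: "mMap (pd act Z) f h \<in> mSp (pd act Z) x" by (rule pd_map_sp[OF Z x y f h])
  show "phi R act \<mu> Z x (mMap (pd act Z) f h) = mMap (pd act W) f (phi R act \<mu> Z y h)"
  proof
    fix \<beta>
    have hs: "\<And>\<gamma>. h \<gamma> \<in> mSp Z (act \<gamma> y)" using h by (simp add: pd_sp)
    have "phi R act \<mu> Z x (mMap (pd act Z) f h) \<beta> = (\<Sum>\<gamma>\<in>{\<gamma>. h \<gamma> \<noteq> 0}. mMap Z (f \<gamma> (- \<mu> + \<beta>)) (h \<gamma>))"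
      using phi_apply[OF x fh] by (simp add: pd_map)
    also have "\<dots> = (\<Sum>\<gamma>\<in>{\<gamma>. h \<gamma> \<noteq> 0}. mMap W (f (\<mu> + \<gamma>) \<beta>) (h (- \<mu> + (\<mu> + \<gamma>))))"
    proof (rule sum.cong[OF refl])
      fix \<gamma>
      have e: "f (- \<mu> + (\<mu> + \<gamma>)) (- \<mu> + \<beta>) = actm (- \<mu>) (f (\<mu> + \<gamma>) \<beta>)" by (rule OC_equiv[OF f])
      show "mMap Z (f \<gamma> (- \<mu> + \<beta>)) (h \<gamma>) = mMap W (f (\<mu> + \<gamma>) \<beta>) (h (- \<mu> + (\<mu> + \<gamma>)))"
        using e wmap[OF act_ob[OF x] act_ob[OF y] OC_entry[OF f]] by simp
    qed
    also have "\<dots> = (\<Sum>\<gamma>\<in>(\<lambda>\<alpha>. \<mu> + \<alpha>) ` {\<gamma>. h \<gamma> \<noteq> 0}. mMap W (f \<gamma> \<beta>) (h (- \<mu> + \<gamma>)))"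
      by (rule sum.reindex[symmetric, unfolded comp_def]) simp
    also have "\<dots> = mMap (pd act W) f (phi R act \<mu> Z y h) \<beta>"
      using phi_apply[OF y h] by (simp add: pd_map supp_shift)
    finally show "phi R act \<mu> Z x (mMap (pd act Z) f h) \<beta> = mMap (pd act W) f (phi R act \<mu> Z y h) \<beta>" .
  qed
next
  fix x h assume "\<not> (x \<in> cOb R \<and> h \<in> mSp (pd act Z) x)"
  then show "phi R act \<mu> Z x h = 0" by (rule phi_out)
qed

lemma phi_modhom:
  assumes X: "is_mod R sc X"
  shows "phi R act \<mu> X \<in> modhom OC (psc sc) (pd act X) (pd act (gact act actm \<mu> X))"
  by (rule phi_modhom_gen[OF X]) auto

lemma psi_modhom:
  assumes X: "is_mod R sc X"
  shows "phi R act (- \<mu>) (gact act actm \<mu> X) \<in> modhom OC (psc sc) (pd act (gact act actm \<mu> X)) (pd act X)"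
proof (rule phi_modhom_gen[OF gact_is_mod[OF X]])
  fix a assume "a \<in> cOb R"
  then show "mSp X a = mSp (gact act actm \<mu> X) (act (- (- \<mu>)) a)" by simp
next
  fix a b g assume "a \<in> cOb R" "b \<in> cOb R" "g \<in> cHom R a b"
  then show "mMap X g = mMap (gact act actm \<mu> X) (actm (- (- \<mu>)) g)"
    by (simp add: actm_add[symmetric])
qed

lemma phi_comp:
  "mcomp (cOb R) (pd act X) (phi R act \<beta> (gact act actm \<alpha> X)) (phi R act \<alpha> X) = phi R act (\<beta> + \<alpha>) X"
proof (rule ext, rule ext)
  fix x h
  show "mcomp (cOb R) (pd act X) (phi R act \<beta> (gact act actm \<alpha> X)) (phi R act \<alpha> X) x h = phi R act (\<beta> + \<alpha>) X x h"
  proof (cases "x \<in> cOb R \<and> h \<in> mSp (pd act X) x")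
    case True
    then have x: "x \<in> cOb R" and h: "h \<in> mSp (pd act X) x" by auto
    have p: "(\<lambda>\<gamma>. h (- \<alpha> + \<gamma>)) \<in> mSp (pd act (gact act actm \<alpha> X)) x"
      by (rule phi_sp_gen[OF x h]) simp
    have "mcomp (cOb R) (pd act X) (phi R act \<beta> (gact act actm \<alpha> X)) (phi R act \<alpha> X) x h
        = (\<lambda>\<gamma>. h (- \<alpha> + (- \<beta> + \<gamma>)))"
      using True phi_apply[OF x h] phi_apply[OF x p] by (simp add: mcomp_def)
    also have "\<dots> = (\<lambda>\<gamma>. h (- (\<beta> + \<alpha>) + \<gamma>))" by (simp only: minus_add add.assoc)
    also have "\<dots> = phi R act (\<beta> + \<alpha>) X x h" using phi_apply[OF x h] by simp
    finally show ?thesis .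
  next
    case False
    show ?thesis unfolding mcomp_def by (simp only: if_not_P[OF False] phi_out[OF False])
  qed
qed

lemma phi_zero: "phi R act 0 X = mid (cOb R) (pd act X)"
  by (auto simp: phi_def mid_def fun_eq_iff)

lemma psi_inv:
  "mcomp (cOb R) (pd act X) (phi R act (- \<mu>) (gact act actm \<mu> X)) (phi R act \<mu> X) = mid (cOb R) (pd act X)"
  "mcomp (cOb R) (pd act (gact act actm \<mu> X)) (phi R act \<mu> X) (phi R act (- \<mu>) (gact act actm \<mu> X))
     = mid (cOb R) (pd act (gact act actm \<mu> X))"
proof -
  show "mcomp (cOb R) (pd act X) (phi R act (- \<mu>) (gact act actm \<mu> X)) (phi R act \<mu> X) = mid (cOb R) (pd act X)"
    unfolding phi_comp by (simp add: phi_zero)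
  show "mcomp (cOb R) (pd act (gact act actm \<mu> X)) (phi R act \<mu> X) (phi R act (- \<mu>) (gact act actm \<mu> X))
     = mid (cOb R) (pd act (gact act actm \<mu> X))"
  proof (rule ext, rule ext)
    fix x h
    show "mcomp (cOb R) (pd act (gact act actm \<mu> X)) (phi R act \<mu> X) (phi R act (- \<mu>) (gact act actm \<mu> X)) x h
       = mid (cOb R) (pd act (gact act actm \<mu> X)) x h"
    proof (cases "x \<in> cOb R \<and> h \<in> mSp (pd act (gact act actm \<mu> X)) x")
      case True
      then have x: "x \<in> cOb R" and h: "h \<in> mSp (pd act (gact act actm \<mu> X)) x" by auto
      have p: "(\<lambda>\<gamma>. h (- (- \<mu>) + \<gamma>)) \<in> mSp (pd act X) x"
        by (rule phi_sp_gen[OF x h]) simp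
      show ?thesis using True phi_apply[OF x h] phi_apply[OF x p]
        by (simp add: mcomp_def mid_def add.assoc[symmetric])
    next
      case False
      show ?thesis unfolding mcomp_def mid_def by (simp only: if_not_P[OF False])
    qed
  qed
qed

context
  fixes X X' u assumes X: "is_mod R sc X" and X': "is_mod R sc X'" and u: "u \<in> modhom R sc X X'"
begin
lemmas up = u[unfolded modhom_def, THEN CollectD]
lemma u_sp: "a \<in> cOb R \<Longrightarrow> v \<in> mSp X a \<Longrightarrow> u a v \<in> mSp X' a"
  using up by blast
lemma u_add: "a \<in> cOb R \<Longrightarrow> v \<in> mSp X a \<Longrightarrow> w \<in> mSp X a \<Longrightarrow> u a (v + w) = u a v + u a w"
  using up[THEN conjunct2, THEN conjunct1, rule_format] by blast
lemma u_sc: "a \<in> cOb R \<Longrightarrow> v \<in> mSp X a \<Longrightarrow> u a (sc c v) = sc c (u a v)"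
  using up[THEN conjunct2, THEN conjunct1, rule_format] sp0[OF X] by blast
lemma u_nat: "a \<in> cOb R \<Longrightarrow> b \<in> cOb R \<Longrightarrow> f \<in> cHom R a b \<Longrightarrow> v \<in> mSp X b \<Longrightarrow> u a (mMap X f v) = mMap X' f (u b v)"
  using up[THEN conjunct2, THEN conjunct2, THEN conjunct1, rule_format] by blast
lemma u_out: "\<not> (a \<in> cOb R \<and> v \<in> mSp X a) \<Longrightarrow> u a v = 0"
  using up[THEN conjunct2, THEN conjunct2, THEN conjunct2, rule_format] by blast
lemma u_0[simp]: "u a 0 = 0"
proof (cases "a \<in> cOb R")
  case True
  then show ?thesis using u_add[of a 0 0] sp0[OF X] by simp
next
  case False
  then show ?thesis using u_out by blast
qed
lemma u_sum: "a \<in> cOb R \<Longrightarrow> (\<And>i. i \<in> I \<Longrightarrow> f i \<in> mSp X a) \<Longrightarrow> u a (sum f I) = (\<Sum>i\<in>I. u a (f i))"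
proof (induction I rule: infinite_finite_induct)
  case (insert i F)
  then show ?case by (simp add: u_add sp_sum[OF X])
qed auto

lemma pdm_apply: "x \<in> cOb R \<Longrightarrow> h \<in> mSp (pd act X) x \<Longrightarrow> pdm R act X u x h = (\<lambda>\<alpha>. u (act \<alpha> x) (h \<alpha>))"
  by (simp add: pdm_def)

lemma pdm_sp: "x \<in> cOb R \<Longrightarrow> h \<in> mSp (pd act X) x \<Longrightarrow> (\<lambda>\<alpha>. u (act \<alpha> x) (h \<alpha>)) \<in> mSp (pd act X') x"
proof -
  assume x: "x \<in> cOb R" and h: "h \<in> mSp (pd act X) x"
  have "{\<alpha>. u (act \<alpha> x) (h \<alpha>) \<noteq> 0} \<subseteq> {\<alpha>. h \<alpha> \<noteq> 0}" by auto
  then show ?thesis using h x u_sp by (auto simp: pd_sp intro: finite_subset)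
qed

lemma phi_natural:
  "mcomp (cOb R) (pd act X) (pdm R act (gact act actm \<mu> X) (gactm R act \<mu> u)) (phi R act \<mu> X)
     = mcomp (cOb R) (pd act X) (phi R act \<mu> X') (pdm R act X u)"
proof (rule ext, rule ext)
  fix x h
  show "mcomp (cOb R) (pd act X) (pdm R act (gact act actm \<mu> X) (gactm R act \<mu> u)) (phi R act \<mu> X) x h
     = mcomp (cOb R) (pd act X) (phi R act \<mu> X') (pdm R act X u) x h"
  proof (cases "x \<in> cOb R \<and> h \<in> mSp (pd act X) x")
    case True
    then have x: "x \<in> cOb R" and h: "h \<in> mSp (pd act X) x" by auto
    have p: "(\<lambda>\<gamma>. h (- \<mu> + \<gamma>)) \<in> mSp (pd act (gact act actm \<mu> X)) x"
      by (rule phi_sp_gen[OF x h]) simp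
    have q: "(\<lambda>\<alpha>. u (act \<alpha> x) (h \<alpha>)) \<in> mSp (pd act X') x" by (rule pdm_sp[OF x h])
    have "mcomp (cOb R) (pd act X) (pdm R act (gact act actm \<mu> X) (gactm R act \<mu> u)) (phi R act \<mu> X) x h
       = (\<lambda>\<gamma>. u (act (- \<mu>) (act \<gamma> x)) (h (- \<mu> + \<gamma>)))"
      using x h p phi_apply[OF x h] by (simp add: mcomp_def pdm_def gactm_def)
    also have "\<dots> = (\<lambda>\<gamma>. u (act (- \<mu> + \<gamma>) x) (h (- \<mu> + \<gamma>)))" using x by (simp add: act_neg_add)
    also have "\<dots> = mcomp (cOb R) (pd act X) (phi R act \<mu> X') (pdm R act X u) x h"
      using x h q phi_apply[OF x q] pdm_apply[OF x h] by (simp add: mcomp_def)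
    finally show ?thesis .
  next
    case False
    show ?thesis unfolding mcomp_def by (simp only: if_not_P[OF False])
  qed
qed

end

lemma neg_add_eq0: "- (\<alpha>::'g) + \<gamma> = 0 \<longleftrightarrow> \<alpha> = \<gamma>"
  by (metis add.left_inverse add_minus_cancel add.right_neutral)

lemma dlt_add: "dlt (v + w) = dlt v + dlt w" by (auto simp: dlt_def fun_eq_iff)
lemma dlt_sc: "dlt (sc c w) = psc sc c (dlt w)" by (auto simp: dlt_def fun_eq_iff psc_def)
lemma dlt_sum: "dlt (sum f I) = (\<Sum>i\<in>I. dlt (f i))"
proof
  fix \<gamma> show "dlt (sum f I) \<gamma> = (\<Sum>i\<in>I. dlt (f i)) \<gamma>"
    unfolding dlt_def sum_fun_apply by (cases "\<gamma> = 0") simp_all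
qed

context
  fixes X Y assumes X: "is_mod R sc X" and Y: "is_mod R sc Y"
begin

abbreviation "Asupp fam \<equiv> {\<alpha>. fam \<alpha> \<noteq> (\<lambda>_ _. 0)}"

lemma dsumD:
  assumes "fam \<in> dsum R act actm sc X Y"
  shows "fam \<alpha> \<in> modhom R sc (gact act actm \<alpha> X) Y" "finite (Asupp fam)"
  using assms by (auto simp: dsum_def)

lemma famX: "is_mod R sc (gact act actm \<alpha> X)" by (rule gact_is_mod[OF X])

lemma F1_apply:
  assumes fam: "fam \<in> dsum R act actm sc X Y" and x: "x \<in> cOb R" and h: "h \<in> mSp (pd act X) x"
  shows "F1 R act actm X fam x h = (\<lambda>\<gamma>. \<Sum>\<alpha>\<in>Asupp fam. fam \<alpha> (act \<gamma> x) (h (- \<alpha> + \<gamma>)))"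
proof -
  have "F1 R act actm X fam x h = (\<Sum>\<alpha>\<in>Asupp fam. (\<lambda>\<gamma>. fam \<alpha> (act \<gamma> x) (h (- \<alpha> + \<gamma>))))"
    unfolding F1_def
  proof (rule sum.cong[OF refl])
    fix \<alpha>
    have p: "(\<lambda>\<gamma>. h (- \<alpha> + \<gamma>)) \<in> mSp (pd act (gact act actm \<alpha> X)) x"
      by (rule phi_sp_gen[OF x h]) simp
    show "mcomp (cOb R) (pd act X) (pdm R act (gact act actm \<alpha> X) (fam \<alpha>)) (phi R act \<alpha> X) x h =
        (\<lambda>\<gamma>. fam \<alpha> (act \<gamma> x) (h (- \<alpha> + \<gamma>)))"
      using x h p phi_apply[OF x h] by (simp add: mcomp_def pdm_def)
  qed
  then show ?thesis by (simp add: fun_eq_iff sum_fun_apply)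
qed

lemma F1_out:
  assumes "\<not> (x \<in> cOb R \<and> h \<in> mSp (pd act X) x)"
  shows "F1 R act actm X fam x h = 0"
  unfolding F1_def mcomp_def by (simp only: if_not_P[OF assms] sum.neutral_const)

lemma F1_dlt:
  assumes fam: "fam \<in> dsum R act actm sc X Y" and x: "x \<in> cOb R" and w: "w \<in> mSp X x"
  shows "F1 R act actm X fam x (dlt w) \<gamma> = fam \<gamma> (act \<gamma> x) w"
proof -
  have "F1 R act actm X fam x (dlt w) \<gamma> = (\<Sum>\<alpha>\<in>Asupp fam. fam \<alpha> (act \<gamma> x) (dlt w (- \<alpha> + \<gamma>)))"
    using F1_apply[OF fam x dlt_sp[OF X x w]] by simp
  also have "\<dots> = fam \<gamma> (act \<gamma> x) (dlt w (- \<gamma> + \<gamma>))"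
  proof (rule sum_single)
    show "finite (Asupp fam)" using dsumD[OF fam] by simp
    show "fam \<alpha> (act \<gamma> x) (dlt w (- \<alpha> + \<gamma>)) = 0" if "\<alpha> \<in> Asupp fam" "\<alpha> \<noteq> \<gamma>" for \<alpha>
      using that u_0[OF famX Y dsumD(1)[OF fam]] by (simp add: dlt_def neg_add_eq0)
    show "fam \<gamma> (act \<gamma> x) (dlt w (- \<gamma> + \<gamma>)) = 0" if "\<gamma> \<notin> Asupp fam"
      using that by simp
  qed
  also have "\<dots> = fam \<gamma> (act \<gamma> x) w" by (simp add: dlt_def)
  finally show ?thesis .
qed

lemma F1_inj:
  assumes fam: "fam \<in> dsum R act actm sc X Y" and fam': "fam' \<in> dsum R act actm sc X Y"
    and eq: "F1 R act actm X fam = F1 R act actm X fam'"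
  shows "fam = fam'"
proof (rule ext, rule ext, rule ext)
  fix \<alpha> y w
  show "fam \<alpha> y w = fam' \<alpha> y w"
  proof (cases "y \<in> cOb R \<and> w \<in> mSp X (act (- \<alpha>) y)")
    case True
    then have y: "y \<in> cOb R" and w: "w \<in> mSp X (act (- \<alpha>) y)" by auto
    have "fam \<alpha> y w = F1 R act actm X fam (act (- \<alpha>) y) (dlt w) \<alpha>"
      using F1_dlt[OF fam act_ob[OF y] w] y by simp
    also have "\<dots> = F1 R act actm X fam' (act (- \<alpha>) y) (dlt w) \<alpha>" using eq by simp
    also have "\<dots> = fam' \<alpha> y w"
      using F1_dlt[OF fam' act_ob[OF y] w] y by simp
    finally show ?thesis .
  next
    case False
    then have "\<not> (y \<in> cOb R \<and> w \<in> mSp (gact act actm \<alpha> X) y)" by simp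
    then show ?thesis using u_out[OF famX Y dsumD(1)[OF fam]] u_out[OF famX Y dsumD(1)[OF fam']] by metis
  qed
qed

end

context
  fixes X Y assumes X: "is_mod R sc X" and Y: "is_mod R sc Y"
begin

lemma act_shift[simp]: "y \<in> cOb R \<Longrightarrow> act (- \<alpha>) (act (\<alpha> + \<beta>) y) = act \<beta> y"
  by (simp add: act_neg_add add.assoc[symmetric])

lemma F1_term_sp:
  assumes fam: "fam \<in> dsum R act actm sc X Y" and x: "x \<in> cOb R" and h: "h \<in> mSp (pd act X) x"
  shows "fam \<alpha> (act \<gamma> x) (h (- \<alpha> + \<gamma>)) \<in> mSp Y (act \<gamma> x)"
proof (rule u_sp[OF famX[OF X Y] Y dsumD(1)[OF X Y fam]])
  show "act \<gamma> x \<in> cOb R" using x by simp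
  show "h (- \<alpha> + \<gamma>) \<in> mSp (gact act actm \<alpha> X) (act \<gamma> x)"
    using h x by (simp add: pd_sp act_neg_add)
qed

lemma F1_supp:
  assumes fam: "fam \<in> dsum R act actm sc X Y" and x: "x \<in> cOb R" and h: "h \<in> mSp (pd act X) x"
  shows "{\<gamma>. F1 R act actm X fam x h \<gamma> \<noteq> 0} \<subseteq> (\<Union>\<alpha>\<in>Asupp fam. (\<lambda>\<beta>. \<alpha> + \<beta>) ` {\<beta>. h \<beta> \<noteq> 0})"
proof
  fix \<gamma> assume "\<gamma> \<in> {\<gamma>. F1 R act actm X fam x h \<gamma> \<noteq> 0}"
  then obtain \<alpha> where a: "\<alpha> \<in> Asupp fam" "fam \<alpha> (act \<gamma> x) (h (- \<alpha> + \<gamma>)) \<noteq> 0"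
    using F1_apply[OF X Y fam x h] by (auto dest: sum.not_neutral_contains_not_neutral)
  then have "h (- \<alpha> + \<gamma>) \<noteq> 0" using u_0[OF famX[OF X Y] Y dsumD(1)[OF X Y fam]] by metis
  moreover have "\<gamma> = \<alpha> + (- \<alpha> + \<gamma>)" by (simp add: grp1)
  ultimately show "\<gamma> \<in> (\<Union>\<alpha>\<in>Asupp fam. (\<lambda>\<beta>. \<alpha> + \<beta>) ` {\<beta>. h \<beta> \<noteq> 0})" using a by blast
qed

lemma F1_sp:
  assumes fam: "fam \<in> dsum R act actm sc X Y" and x: "x \<in> cOb R" and h: "h \<in> mSp (pd act X) x"
  shows "F1 R act actm X fam x h \<in> mSp (pd act Y) x"
proof -
  have "finite (\<Union>\<alpha>\<in>Asupp fam. (\<lambda>\<beta>. \<alpha> + \<beta>) ` {\<beta>. h \<beta> \<noteq> 0})"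
    using dsumD(2)[OF X Y fam] h by (simp add: pd_sp)
  then have "finite {\<gamma>. F1 R act actm X fam x h \<gamma> \<noteq> 0}" using F1_supp[OF fam x h] finite_subset by blast
  moreover have "F1 R act actm X fam x h \<gamma> \<in> mSp Y (act \<gamma> x)" for \<gamma>
    using F1_apply[OF X Y fam x h] F1_term_sp[OF fam x h] x by (auto intro!: sp_sum[OF Y])
  ultimately show ?thesis by (simp add: pd_sp)
qed

lemma F1_natural:
  assumes fam: "fam \<in> dsum R act actm sc X Y" and x: "x \<in> cOb R" and y: "y \<in> cOb R"
    and f: "f \<in> cHom OC x y" and h: "h \<in> mSp (pd act X) y"
  shows "F1 R act actm X fam x (mMap (pd act X) f h) = mMap (pd act Y) f (F1 R act actm X fam y h)"
proof
  fix \<gamma>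
  let ?A = "Asupp fam"
  let ?S = "{\<beta>. h \<beta> \<noteq> 0}"
  let ?B = "\<Union>\<alpha>\<in>?A. (\<lambda>\<beta>. \<alpha> + \<beta>) ` ?S"
  have A: "finite ?A" using dsumD(2)[OF X Y fam] .
  have S: "finite ?S" and hs: "\<And>\<beta>. h \<beta> \<in> mSp X (act \<beta> y)" using h by (auto simp: pd_sp)
  have B: "finite ?B" using A S by simp
  have famh: "\<And>\<alpha>. fam \<alpha> \<in> modhom R sc (gact act actm \<alpha> X) Y" using dsumD(1)[OF X Y fam] .
  have h': "mMap (pd act X) f h \<in> mSp (pd act X) x" by (rule pd_map_sp[OF X x y f h])
  have hmem: "h \<beta> \<in> mSp (gact act actm \<alpha> X) (act (\<alpha> + \<beta>) y)" for \<alpha> \<beta> using hs y by simp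
  have step1: "fam \<alpha> (act \<gamma> x) (mMap (pd act X) f h (- \<alpha> + \<gamma>)) =
      (\<Sum>\<beta>\<in>?S. mMap Y (f (\<alpha> + \<beta>) \<gamma>) (fam \<alpha> (act (\<alpha> + \<beta>) y) (h \<beta>)))" for \<alpha>
  proof -
    have "mMap (pd act X) f h (- \<alpha> + \<gamma>) = (\<Sum>\<beta>\<in>?S. mMap (gact act actm \<alpha> X) (f (\<alpha> + \<beta>) \<gamma>) (h \<beta>))"
      unfolding pd_map
    proof (rule sum.cong[OF refl])
      fix \<beta>
      have "f (- \<alpha> + (\<alpha> + \<beta>)) (- \<alpha> + \<gamma>) = actm (- \<alpha>) (f (\<alpha> + \<beta>) \<gamma>)" by (rule OC_equiv[OF f])
      then show "mMap X (f \<beta> (- \<alpha> + \<gamma>)) (h \<beta>) = mMap (gact act actm \<alpha> X) (f (\<alpha> + \<beta>) \<gamma>) (h \<beta>)"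
        by simp
    qed
    then have "fam \<alpha> (act \<gamma> x) (mMap (pd act X) f h (- \<alpha> + \<gamma>)) =
        (\<Sum>\<beta>\<in>?S. fam \<alpha> (act \<gamma> x) (mMap (gact act actm \<alpha> X) (f (\<alpha> + \<beta>) \<gamma>) (h \<beta>)))"
      using u_sum[OF famX[OF X Y] Y famh, of "act \<gamma> x" ?S] x
        map_sp[OF famX[OF X Y] act_ob[OF x] act_ob[OF y] OC_entry[OF f] hmem] by simp
    also have "\<dots> = (\<Sum>\<beta>\<in>?S. mMap Y (f (\<alpha> + \<beta>) \<gamma>) (fam \<alpha> (act (\<alpha> + \<beta>) y) (h \<beta>)))"
      by (rule sum.cong[OF refl], rule u_nat[OF famX[OF X Y] Y famh act_ob[OF x] act_ob[OF y] OC_entry[OF f] hmem])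
    finally show ?thesis .
  qed
  have "F1 R act actm X fam x (mMap (pd act X) f h) \<gamma> =
      (\<Sum>\<alpha>\<in>?A. \<Sum>\<beta>\<in>?S. mMap Y (f (\<alpha> + \<beta>) \<gamma>) (fam \<alpha> (act (\<alpha> + \<beta>) y) (h \<beta>)))"
    using F1_apply[OF X Y fam x h'] step1 by simp
  also have "\<dots> = (\<Sum>\<alpha>\<in>?A. \<Sum>\<beta>'\<in>?B. mMap Y (f \<beta>' \<gamma>) (fam \<alpha> (act \<beta>' y) (h (- \<alpha> + \<beta>'))))"
  proof (rule sum.cong[OF refl])
    fix \<alpha> assume a: "\<alpha> \<in> ?A"
    have inj: "inj_on (\<lambda>\<beta>. \<alpha> + \<beta>) ?S" by (simp add: inj_on_def)
    have "(\<Sum>\<beta>\<in>?S. mMap Y (f (\<alpha> + \<beta>) \<gamma>) (fam \<alpha> (act (\<alpha> + \<beta>) y) (h \<beta>))) =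
        (\<Sum>\<beta>\<in>?S. mMap Y (f (\<alpha> + \<beta>) \<gamma>) (fam \<alpha> (act (\<alpha> + \<beta>) y) (h (- \<alpha> + (\<alpha> + \<beta>)))))"
      by simp
    also have "\<dots> = (\<Sum>\<beta>'\<in>(\<lambda>\<beta>. \<alpha> + \<beta>) ` ?S. mMap Y (f \<beta>' \<gamma>) (fam \<alpha> (act \<beta>' y) (h (- \<alpha> + \<beta>'))))"
      using sum.reindex[OF inj, of "\<lambda>\<beta>'. mMap Y (f \<beta>' \<gamma>) (fam \<alpha> (act \<beta>' y) (h (- \<alpha> + \<beta>')))"] by simp
    also have "\<dots> = (\<Sum>\<beta>'\<in>?B. mMap Y (f \<beta>' \<gamma>) (fam \<alpha> (act \<beta>' y) (h (- \<alpha> + \<beta>'))))"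
    proof (rule sum.mono_neutral_left[OF B])
      show "(\<lambda>\<beta>. \<alpha> + \<beta>) ` ?S \<subseteq> ?B" using a by blast
      show "\<forall>i\<in>?B - (\<lambda>\<beta>. \<alpha> + \<beta>) ` ?S. mMap Y (f i \<gamma>) (fam \<alpha> (act i y) (h (- \<alpha> + i))) = 0"
      proof
        fix i assume i: "i \<in> ?B - (\<lambda>\<beta>. \<alpha> + \<beta>) ` ?S"
        have "h (- \<alpha> + i) = 0"
        proof (rule ccontr)
          assume "h (- \<alpha> + i) \<noteq> 0"
          moreover have "i = \<alpha> + (- \<alpha> + i)" by (simp add: grp1)
          ultimately show False using i by blast
        qed
        then show "mMap Y (f i \<gamma>) (fam \<alpha> (act i y) (h (- \<alpha> + i))) = 0"
          using u_0[OF famX[OF X Y] Y famh] oc_map(1)[OF Y f x y] by simp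
      qed
    qed
    finally show "(\<Sum>\<beta>\<in>?S. mMap Y (f (\<alpha> + \<beta>) \<gamma>) (fam \<alpha> (act (\<alpha> + \<beta>) y) (h \<beta>))) =
        (\<Sum>\<beta>'\<in>?B. mMap Y (f \<beta>' \<gamma>) (fam \<alpha> (act \<beta>' y) (h (- \<alpha> + \<beta>'))))" .
  qed
  also have "\<dots> = (\<Sum>\<beta>'\<in>?B. \<Sum>\<alpha>\<in>?A. mMap Y (f \<beta>' \<gamma>) (fam \<alpha> (act \<beta>' y) (h (- \<alpha> + \<beta>'))))"
    by (rule sum.swap)
  also have "\<dots> = (\<Sum>\<beta>'\<in>?B. mMap Y (f \<beta>' \<gamma>) (F1 R act actm X fam y h \<beta>'))"
  proof (rule sum.cong[OF refl])
    fix \<beta>'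
    show "(\<Sum>\<alpha>\<in>?A. mMap Y (f \<beta>' \<gamma>) (fam \<alpha> (act \<beta>' y) (h (- \<alpha> + \<beta>')))) =
        mMap Y (f \<beta>' \<gamma>) (F1 R act actm X fam y h \<beta>')"
      unfolding F1_apply[OF X Y fam y h]
      by (rule oc_map(5)[OF Y f x y, symmetric], rule F1_term_sp[OF fam y h])
  qed
  also have "\<dots> = mMap (pd act Y) f (F1 R act actm X fam y h) \<gamma>"
    by (rule pd_map_superset[OF Y x y f F1_sp[OF fam y h] B F1_supp[OF fam y h], symmetric])
  finally show "F1 R act actm X fam x (mMap (pd act X) f h) \<gamma> = mMap (pd act Y) f (F1 R act actm X fam y h) \<gamma>" .
qed

lemma F1_modhom:
  assumes fam: "fam \<in> dsum R act actm sc X Y"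
  shows "F1 R act actm X fam \<in> modhom OC (psc sc) (pd act X) (pd act Y)"
  unfolding modhom_def OC_ob
proof (intro CollectI conjI ballI allI impI)
  fix x h assume x: "x \<in> cOb R" and h: "h \<in> mSp (pd act X) x"
  show "F1 R act actm X fam x h \<in> mSp (pd act Y) x" by (rule F1_sp[OF fam x h])
next
  fix x v w c assume x: "x \<in> cOb R" and v: "v \<in> mSp (pd act X) x" and w: "w \<in> mSp (pd act X) x"
  have vw: "v + w \<in> mSp (pd act X) x" "psc sc c v \<in> mSp (pd act X) x"
    using pd_sp_closed[OF X x] v w by auto
  have famh: "\<And>\<alpha>. fam \<alpha> \<in> modhom R sc (gact act actm \<alpha> X) Y" using dsumD(1)[OF X Y fam] .
  have vs: "\<And>\<alpha> \<gamma>. v (- \<alpha> + \<gamma>) \<in> mSp (gact act actm \<alpha> X) (act \<gamma> x)"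
    and ws: "\<And>\<alpha> \<gamma>. w (- \<alpha> + \<gamma>) \<in> mSp (gact act actm \<alpha> X) (act \<gamma> x)"
    using v w x by (auto simp: pd_sp act_neg_add)
  show "F1 R act actm X fam x (v + w) = F1 R act actm X fam x v + F1 R act actm X fam x w"
    unfolding F1_apply[OF X Y fam x v] F1_apply[OF X Y fam x w] F1_apply[OF X Y fam x vw(1)]
    using u_add[OF famX[OF X Y] Y famh act_ob[OF x] vs ws] by (simp add: fun_eq_iff sum.distrib)
  show "F1 R act actm X fam x (psc sc c v) = psc sc c (F1 R act actm X fam x v)"
    unfolding F1_apply[OF X Y fam x v] F1_apply[OF X Y fam x vw(2)]
    using u_sc[OF famX[OF X Y] Y famh act_ob[OF x] vs] by (simp add: fun_eq_iff psc_def scale_sum_right)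
next
  fix x y f v assume "x \<in> cOb R" "y \<in> cOb R" "f \<in> cHom OC x y" "v \<in> mSp (pd act X) y"
  then show "F1 R act actm X fam x (mMap (pd act X) f v) = mMap (pd act Y) f (F1 R act actm X fam y v)"
    by (rule F1_natural[OF fam])
next
  fix x v assume "\<not> (x \<in> cOb R \<and> v \<in> mSp (pd act X) x)"
  then show "F1 R act actm X fam x v = 0" by (rule F1_out[OF X Y])
qed

end

definition Pm :: "'o \<Rightarrow> 'o \<Rightarrow> 'a \<Rightarrow> 'g \<Rightarrow> 'g \<Rightarrow> 'a" where
  "Pm a b g = Ext (\<lambda>\<delta>. if \<delta> = 0 then g else czero R (act \<delta> a) b)"

definition Tr :: "'o \<Rightarrow> 'g \<Rightarrow> 'g \<Rightarrow> 'g \<Rightarrow> 'a" where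
  "Tr x \<alpha>' = Ext (\<lambda>\<delta>. if \<delta> = \<alpha>' then cid R (act \<alpha>' x) else czero R (act \<delta> x) (act \<alpha>' x))"

lemma Pm_hom: assumes ab: "a \<in> cOb R" "b \<in> cOb R" and g: "g \<in> cHom R a b"
  shows "Pm a b g \<in> cHom OC a b"
  unfolding Pm_def
proof (rule Ext_hom[OF ab])
  show "(if \<delta> = 0 then g else czero R (act \<delta> a) b) \<in> cHom R (act \<delta> a) b" for \<delta>
    using g ab zero_hom by auto
  show "finite {\<delta>. (if \<delta> = 0 then g else czero R (act \<delta> a) b) \<noteq> czero R (act \<delta> a) b}"
    by (rule finite_subset[of _ "{0}"]) auto
qed

lemma Tr_hom: assumes x: "x \<in> cOb R"
  shows "Tr x \<alpha>' \<in> cHom OC x (act \<alpha>' x)"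
  unfolding Tr_def
proof (rule Ext_hom[OF x act_ob[OF x]])
  show "(if \<delta> = \<alpha>' then cid R (act \<alpha>' x) else czero R (act \<delta> x) (act \<alpha>' x)) \<in> cHom R (act \<delta> x) (act \<alpha>' x)" for \<delta>
    using x zero_hom id_hom by auto
  show "finite {\<delta>. (if \<delta> = \<alpha>' then cid R (act \<alpha>' x) else czero R (act \<delta> x) (act \<alpha>' x)) \<noteq> czero R (act \<delta> x) (act \<alpha>' x)}"
    by (rule finite_subset[of _ "{\<alpha>'}"]) auto
qed

context
  fixes Z assumes Z: "is_mod R sc Z"
begin

lemma Pm_map:
  assumes ab: "a \<in> cOb R" "b \<in> cOb R" and g: "g \<in> cHom R a b" and k: "k \<in> mSp (pd act Z) b"
  shows "mMap (pd act Z) (Pm a b g) k \<alpha> = mMap Z (actm \<alpha> g) (k \<alpha>)"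
proof -
  let ?S = "{\<beta>. k \<beta> \<noteq> 0} \<union> {\<alpha>}"
  have S: "finite ?S" using k by (simp add: pd_sp)
  have ks: "\<And>\<beta>. k \<beta> \<in> mSp Z (act \<beta> b)" using k by (simp add: pd_sp)
  have "mMap (pd act Z) (Pm a b g) k \<alpha> = (\<Sum>\<beta>\<in>?S. mMap Z (Pm a b g \<beta> \<alpha>) (k \<beta>))"
    by (rule pd_map_superset[OF Z ab Pm_hom[OF ab g] k S]) auto
  also have "\<dots> = mMap Z (Pm a b g \<alpha> \<alpha>) (k \<alpha>)"
  proof (rule sum_single[OF S])
    fix \<beta> assume "\<beta> \<in> ?S" "\<beta> \<noteq> \<alpha>"
    then have "- \<beta> + \<alpha> \<noteq> 0" by (simp add: neg_add_eq0)
    then have "Pm a b g \<beta> \<alpha> = czero R (act \<alpha> a) (act \<beta> b)"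
      using ab by (simp add: Pm_def Ext_def)
    then show "mMap Z (Pm a b g \<beta> \<alpha>) (k \<beta>) = 0" using map_czero[OF Z] ab ks by simp
  qed auto
  also have "\<dots> = mMap Z (actm \<alpha> g) (k \<alpha>)" by (simp add: Pm_def Ext_def)
  finally show ?thesis .
qed

lemma Pm_dlt:
  assumes ab: "a \<in> cOb R" "b \<in> cOb R" and g: "g \<in> cHom R a b" and w: "w \<in> mSp Z b"
  shows "mMap (pd act Z) (Pm a b g) (dlt w) = dlt (mMap Z g w)"
proof
  fix \<alpha>
  show "mMap (pd act Z) (Pm a b g) (dlt w) \<alpha> = dlt (mMap Z g w) \<alpha>"
    unfolding Pm_map[OF ab g dlt_sp[OF Z ab(2) w]]
    using map_0[OF Z act_ob[OF ab(1)] act_ob[OF ab(2)] actm_hom[OF ab g]] ab g by (simp add: dlt_def)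
qed

lemma Tr_map:
  assumes x: "x \<in> cOb R" and k: "k \<in> mSp (pd act Z) (act \<alpha>' x)"
  shows "mMap (pd act Z) (Tr x \<alpha>') k \<gamma> = k (\<gamma> + - \<alpha>')"
proof -
  let ?b = "\<gamma> + - \<alpha>'"
  let ?S = "{\<beta>. k \<beta> \<noteq> 0} \<union> {?b}"
  have S: "finite ?S" using k by (simp add: pd_sp)
  have ks: "\<And>\<beta>. k \<beta> \<in> mSp Z (act \<beta> (act \<alpha>' x))" using k by (simp add: pd_sp)
  have e: "- ?b + \<gamma> = \<alpha>'" by (simp add: minus_add add.assoc)
  have "mMap (pd act Z) (Tr x \<alpha>') k \<gamma> = (\<Sum>\<beta>\<in>?S. mMap Z (Tr x \<alpha>' \<beta> \<gamma>) (k \<beta>))"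
    by (rule pd_map_superset[OF Z x act_ob[OF x] Tr_hom[OF x] k S]) auto
  also have "\<dots> = mMap Z (Tr x \<alpha>' ?b \<gamma>) (k ?b)"
  proof (rule sum_single[OF S])
    fix \<beta> assume "\<beta> \<in> ?S" "\<beta> \<noteq> ?b"
    then have "- \<beta> + \<gamma> \<noteq> \<alpha>'" by (metis add.assoc add_minus_cancel add.right_inverse add.right_neutral)
    then have "Tr x \<alpha>' \<beta> \<gamma> = czero R (act \<gamma> x) (act \<beta> (act \<alpha>' x))"
      using x by (simp add: Tr_def Ext_def)
    then show "mMap Z (Tr x \<alpha>' \<beta> \<gamma>) (k \<beta>) = 0" using map_czero[OF Z] x ks by simp
  qed auto
  also have "\<dots> = mMap Z (cid R (act ?b (act \<alpha>' x))) (k ?b)"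
    using x by (simp add: Tr_def Ext_def e)
  also have "\<dots> = k ?b" using map_id[OF Z] x ks by simp
  finally show ?thesis .
qed

end

lemma pd_sum: "is_mod R sc X \<Longrightarrow> x \<in> cOb R \<Longrightarrow> (\<And>i. i \<in> I \<Longrightarrow> f i \<in> mSp (pd act X) x) \<Longrightarrow>
   sum f I \<in> mSp (pd act X) x"
  by (induction I rule: infinite_finite_induct) (auto intro: pd_sp_closed)

context
  fixes X Y U assumes X: "is_mod R sc X" and Y: "is_mod R sc Y"
    and U: "U \<in> modhom OC (psc sc) (pd act X) (pd act Y)"
begin
lemmas Up = U[unfolded modhom_def OC_ob, THEN CollectD]
lemma U_sp: "a \<in> cOb R \<Longrightarrow> v \<in> mSp (pd act X) a \<Longrightarrow> U a v \<in> mSp (pd act Y) a"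
  using Up by blast
lemma U_add: "a \<in> cOb R \<Longrightarrow> v \<in> mSp (pd act X) a \<Longrightarrow> w \<in> mSp (pd act X) a \<Longrightarrow> U a (v + w) = U a v + U a w"
  using Up[THEN conjunct2, THEN conjunct1, rule_format] by blast
lemma U_sc: "a \<in> cOb R \<Longrightarrow> v \<in> mSp (pd act X) a \<Longrightarrow> U a (psc sc c v) = psc sc c (U a v)"
  using Up[THEN conjunct2, THEN conjunct1, rule_format] pd_sp_closed(1)[OF X] by blast
lemma U_nat: "a \<in> cOb R \<Longrightarrow> b \<in> cOb R \<Longrightarrow> f \<in> cHom OC a b \<Longrightarrow> v \<in> mSp (pd act X) b \<Longrightarrow>
    U a (mMap (pd act X) f v) = mMap (pd act Y) f (U b v)"
  using Up[THEN conjunct2, THEN conjunct2, THEN conjunct1, rule_format] by blast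
lemma U_out: "\<not> (a \<in> cOb R \<and> v \<in> mSp (pd act X) a) \<Longrightarrow> U a v = 0"
  using Up[THEN conjunct2, THEN conjunct2, THEN conjunct2, rule_format] by blast
lemma U_0[simp]: "U a 0 = 0"
proof (cases "a \<in> cOb R")
  case True
  then show ?thesis using U_add[of a 0 0] pd_sp_closed(1)[OF X] by simp
next
  case False
  then show ?thesis using U_out by blast
qed
lemma U_sum: "a \<in> cOb R \<Longrightarrow> (\<And>i. i \<in> I \<Longrightarrow> f i \<in> mSp (pd act X) a) \<Longrightarrow> U a (sum f I) = (\<Sum>i\<in>I. U a (f i))"
proof (induction I rule: infinite_finite_induct)
  case (insert i F)
  have "sum f F \<in> mSp (pd act X) a"
    using insert by (intro pd_sum[OF X]) auto
  then have "U a (f i + sum f F) = U a (f i) + U a (sum f F)" using insert by (intro U_add) auto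
  moreover have "U a (sum f F) = (\<Sum>i\<in>F. U a (f i))" using insert by auto
  ultimately show ?case by (simp only: sum.insert[OF insert(1,2)])
qed auto

end

section \<open>surjectivity\<close>

lemma e1: "- ((\<gamma>::'g) + - \<alpha>') + \<gamma> = \<alpha>'" by (simp add: minus_add add.assoc)
lemma e2: "(\<gamma>::'g) + - (- \<alpha> + \<gamma>) = \<alpha>" by (simp add: minus_add add.assoc[symmetric])
lemma e3: "(\<gamma>::'g) + - a = \<gamma> + - b \<longleftrightarrow> a = b" by (simp only: add_left_cancel neg_equal_iff_equal)
lemma e4: "(\<gamma>::'g) + - a = 0 \<longleftrightarrow> \<gamma> = a"
  by (metis add.left_neutral add.right_inverse diff_add_cancel diff_conv_add_uminus)

definition famU :: "('o, 'a, 'v) cmod \<Rightarrow> ('o \<Rightarrow> ('g \<Rightarrow> 'v) \<Rightarrow> 'g \<Rightarrow> 'v) \<Rightarrow> 'g \<Rightarrow> 'o \<Rightarrow> 'v \<Rightarrow> 'v" where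
  "famU X U \<alpha> y w = (if y \<in> cOb R \<and> w \<in> mSp X (act (- \<alpha>) y) then U (act (- \<alpha>) y) (dlt w) \<alpha> else 0)"

context
  fixes X Y U assumes X: "is_mod R sc X" and Y: "is_mod R sc Y"
    and U: "U \<in> modhom OC (psc sc) (pd act X) (pd act Y)"
begin

lemma famU_in: "y \<in> cOb R \<Longrightarrow> w \<in> mSp X (act (- \<alpha>) y) \<Longrightarrow> famU X U \<alpha> y w = U (act (- \<alpha>) y) (dlt w) \<alpha>"
  by (simp add: famU_def)

lemma famU_modhom: "famU X U \<alpha> \<in> modhom R sc (gact act actm \<alpha> X) Y"
  unfolding modhom_def gact_sp gact_map
proof (intro CollectI conjI ballI allI impI)
  fix y w assume y: "y \<in> cOb R" and w: "w \<in> mSp X (act (- \<alpha>) y)"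
  have "U (act (- \<alpha>) y) (dlt w) \<in> mSp (pd act Y) (act (- \<alpha>) y)"
    by (rule U_sp[OF X Y U act_ob[OF y] dlt_sp[OF X act_ob[OF y] w]])
  then have "U (act (- \<alpha>) y) (dlt w) \<alpha> \<in> mSp Y (act \<alpha> (act (- \<alpha>) y))" by (simp add: pd_sp)
  then show "famU X U \<alpha> y w \<in> mSp Y y" using famU_in[OF y w] y by simp
next
  fix y v w c assume y: "y \<in> cOb R" and v: "v \<in> mSp X (act (- \<alpha>) y)" and w: "w \<in> mSp X (act (- \<alpha>) y)"
  have a: "act (- \<alpha>) y \<in> cOb R" using y by simp
  have vw: "v + w \<in> mSp X (act (- \<alpha>) y)" "sc c v \<in> mSp X (act (- \<alpha>) y)"
    using sp_add[OF X a v w] sp_sc[OF X a v] by auto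
  show "famU X U \<alpha> y (v + w) = famU X U \<alpha> y v + famU X U \<alpha> y w"
    using famU_in[OF y v] famU_in[OF y w] famU_in[OF y vw(1)]
      U_add[OF X Y U a dlt_sp[OF X a v] dlt_sp[OF X a w]] by (simp add: dlt_add)
  show "famU X U \<alpha> y (sc c v) = sc c (famU X U \<alpha> y v)"
    using famU_in[OF y v] famU_in[OF y vw(2)]
      U_sc[OF X Y U a dlt_sp[OF X a v]] by (simp add: dlt_sc)
next
  fix y z g w assume y: "y \<in> cOb R" and z: "z \<in> cOb R" and g: "g \<in> cHom R y z"
    and w: "w \<in> mSp X (act (- \<alpha>) z)"
  let ?a = "act (- \<alpha>) y" and ?b = "act (- \<alpha>) z" and ?g = "actm (- \<alpha>) g"
  have ab: "?a \<in> cOb R" "?b \<in> cOb R" using y z by auto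
  have g': "?g \<in> cHom R ?a ?b" by (rule actm_hom[OF y z g])
  have gw: "mMap X ?g w \<in> mSp X ?a" by (rule map_sp[OF X ab g' w])
  have Ub: "U ?b (dlt w) \<in> mSp (pd act Y) ?b" by (rule U_sp[OF X Y U ab(2) dlt_sp[OF X ab(2) w]])
  have "famU X U \<alpha> y (mMap X ?g w) = U ?a (dlt (mMap X ?g w)) \<alpha>" by (rule famU_in[OF y gw])
  also have "\<dots> = U ?a (mMap (pd act X) (Pm ?a ?b ?g) (dlt w)) \<alpha>" using Pm_dlt[OF X ab g' w] by simp
  also have "\<dots> = mMap (pd act Y) (Pm ?a ?b ?g) (U ?b (dlt w)) \<alpha>"
    using U_nat[OF X Y U ab Pm_hom[OF ab g'] dlt_sp[OF X ab(2) w]] by simp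
  also have "\<dots> = mMap Y (actm \<alpha> ?g) (U ?b (dlt w) \<alpha>)" by (rule Pm_map[OF Y ab g' Ub])
  also have "\<dots> = mMap Y g (famU X U \<alpha> z w)"
    using famU_in[OF z w] actm_add[OF y z g, of \<alpha> "- \<alpha>"] y z g by simp
  finally show "famU X U \<alpha> y (mMap X ?g w) = mMap Y g (famU X U \<alpha> z w)" .
next
  fix y w assume nn: "\<not> (y \<in> cOb R \<and> w \<in> mSp X (act (- \<alpha>) y))"
  show "famU X U \<alpha> y w = 0" unfolding famU_def by (simp only: if_not_P[OF nn])
qed

lemma famU_fin:
  assumes fgX: "fg R X"
  shows "finite {\<alpha>. famU X U \<alpha> \<noteq> (\<lambda>_ _. 0)}"
proof -
  obtain n :: nat and xs vs where gen: "\<forall>i<n. xs i \<in> cOb R \<and> vs i \<in> mSp X (xs i)"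
    and span: "\<forall>x\<in>cOb R. \<forall>w\<in>mSp X x. \<exists>fs. (\<forall>i<n. fs i \<in> cHom R x (xs i)) \<and>
         w = (\<Sum>i<n. mMap X (fs i) (vs i))"
    using fgX unfolding fg_def by blast
  let ?T = "\<Union>i<n. {\<alpha>. U (xs i) (dlt (vs i)) \<alpha> \<noteq> 0}"
  have fin: "finite ?T"
  proof (rule finite_UN_I)
    show "finite {..<n}" by simp
    fix i assume "i \<in> {..<n}"
    then have "U (xs i) (dlt (vs i)) \<in> mSp (pd act Y) (xs i)"
      using gen U_sp[OF X Y U] dlt_sp[OF X] by simp
    then show "finite {\<alpha>. U (xs i) (dlt (vs i)) \<alpha> \<noteq> 0}" by (simp add: pd_sp)
  qed
  have "{\<alpha>. famU X U \<alpha> \<noteq> (\<lambda>_ _. 0)} \<subseteq> ?T"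
  proof
    fix \<alpha> assume "\<alpha> \<in> {\<alpha>. famU X U \<alpha> \<noteq> (\<lambda>_ _. 0)}"
    then obtain y w where nz: "famU X U \<alpha> y w \<noteq> 0" by (auto simp: fun_eq_iff)
    then have y: "y \<in> cOb R" and w: "w \<in> mSp X (act (- \<alpha>) y)" by (auto simp: famU_def split: if_splits)
    let ?a = "act (- \<alpha>) y"
    have a: "?a \<in> cOb R" using y by simp
    obtain fs where fs: "\<forall>i<n. fs i \<in> cHom R ?a (xs i)" and wsum: "w = (\<Sum>i<n. mMap X (fs i) (vs i))"
      using span a w by blast
    have "dlt w = (\<Sum>i<n. mMap (pd act X) (Pm ?a (xs i) (fs i)) (dlt (vs i)))"
      unfolding wsum dlt_sum
      by (rule sum.cong[OF refl], rule Pm_dlt[OF X a, symmetric]) (use gen fs in auto)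
    then have "U ?a (dlt w) = (\<Sum>i<n. U ?a (mMap (pd act X) (Pm ?a (xs i) (fs i)) (dlt (vs i))))"
    proof (simp only:, intro U_sum[OF X Y U a])
      fix i assume "i \<in> {..<n}"
      then show "mMap (pd act X) (Pm ?a (xs i) (fs i)) (dlt (vs i)) \<in> mSp (pd act X) ?a"
        using gen fs by (auto intro!: pd_map_sp[OF X a] Pm_hom[OF a] dlt_sp[OF X])
    qed
    also have "\<dots> = (\<Sum>i<n. mMap (pd act Y) (Pm ?a (xs i) (fs i)) (U (xs i) (dlt (vs i))))"
      by (rule sum.cong[OF refl], rule U_nat[OF X Y U a _ Pm_hom[OF a]]) (use gen fs dlt_sp[OF X] in auto)
    finally have "U ?a (dlt w) \<alpha> = (\<Sum>i<n. mMap Y (actm \<alpha> (fs i)) (U (xs i) (dlt (vs i)) \<alpha>))"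
      unfolding sum_fun_apply
      using Pm_map[OF Y a _ _ U_sp[OF X Y U _ dlt_sp[OF X]]] gen fs by simp
    moreover have "U ?a (dlt w) \<alpha> \<noteq> 0" using nz famU_in[OF y w] by simp
    ultimately obtain i where i: "i < n" "mMap Y (actm \<alpha> (fs i)) (U (xs i) (dlt (vs i)) \<alpha>) \<noteq> 0"
      by (auto dest: sum.not_neutral_contains_not_neutral)
    have "U (xs i) (dlt (vs i)) \<alpha> \<noteq> 0"
    proof
      assume "U (xs i) (dlt (vs i)) \<alpha> = 0"
      moreover have "mMap Y (actm \<alpha> (fs i)) 0 = 0"
        using map_0[OF Y act_ob[OF a] act_ob actm_hom[OF a _ ]] gen fs i(1) by blast
      ultimately show False using i by simp
    qed
    then show "\<alpha> \<in> ?T" using i by blast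
  qed
  then show ?thesis using fin finite_subset by blast
qed

end

context
  fixes X Y U assumes X: "is_mod R sc X" and Y: "is_mod R sc Y"
    and U: "U \<in> modhom OC (psc sc) (pd act X) (pd act Y)" and fgX: "fg R X"
begin

lemma famU_dsum: "famU X U \<in> dsum R act actm sc X Y"
  unfolding dsum_def using famU_modhom[OF X Y U] famU_fin[OF X Y U fgX] by blast

lemma F1_famU: "F1 R act actm X (famU X U) = U"
proof (rule ext, rule ext)
  fix x h
  show "F1 R act actm X (famU X U) x h = U x h"
  proof (cases "x \<in> cOb R \<and> h \<in> mSp (pd act X) x")
    case True
    then have x: "x \<in> cOb R" and h: "h \<in> mSp (pd act X) x" by auto
    let ?fam = "famU X U"
    let ?A = "{\<alpha>. ?fam \<alpha> \<noteq> (\<lambda>_ _. 0)}"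
    let ?S = "{\<beta>. h \<beta> \<noteq> 0}"
    have S: "finite ?S" and hs: "\<And>\<beta>. h \<beta> \<in> mSp X (act \<beta> x)" using h by (auto simp: pd_sp)
    have A: "finite ?A" by (rule famU_fin[OF X Y U fgX])
    have dh: "\<And>\<alpha>'. dlt (h \<alpha>') \<in> mSp (pd act X) (act \<alpha>' x)" using dlt_sp[OF X act_ob[OF x] hs] .
    have memT: "\<And>\<alpha>'. mMap (pd act X) (Tr x \<alpha>') (dlt (h \<alpha>')) \<in> mSp (pd act X) x"
      by (rule pd_map_sp[OF X x act_ob[OF x] Tr_hom[OF x] dh])
    have hdec: "h = (\<Sum>\<alpha>'\<in>?S. mMap (pd act X) (Tr x \<alpha>') (dlt (h \<alpha>')))"
    proof
      fix \<gamma>'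
      have "(\<Sum>\<alpha>'\<in>?S. mMap (pd act X) (Tr x \<alpha>') (dlt (h \<alpha>'))) \<gamma>' = (\<Sum>\<alpha>'\<in>?S. dlt (h \<alpha>') (\<gamma>' + - \<alpha>'))"
        unfolding sum_fun_apply using Tr_map[OF X x dh] by simp
      also have "\<dots> = dlt (h \<gamma>') (\<gamma>' + - \<gamma>')"
        by (rule sum_single[OF S]) (auto simp: dlt_def e4)
      also have "\<dots> = h \<gamma>'" by (simp add: dlt_def)
      finally show "h \<gamma>' = (\<Sum>\<alpha>'\<in>?S. mMap (pd act X) (Tr x \<alpha>') (dlt (h \<alpha>'))) \<gamma>'" by simp
    qed
    show ?thesis
    proof
      fix \<gamma>
      define G where "G \<alpha> = ?fam \<alpha> (act \<gamma> x) (h (- \<alpha> + \<gamma>))" for \<alpha>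
      have "U x h = U x (\<Sum>\<alpha>'\<in>?S. mMap (pd act X) (Tr x \<alpha>') (dlt (h \<alpha>')))" using hdec by simp
      also have "\<dots> = (\<Sum>\<alpha>'\<in>?S. U x (mMap (pd act X) (Tr x \<alpha>') (dlt (h \<alpha>'))))"
        by (rule U_sum[OF X Y U x memT])
      also have "\<dots> = (\<Sum>\<alpha>'\<in>?S. mMap (pd act Y) (Tr x \<alpha>') (U (act \<alpha>' x) (dlt (h \<alpha>'))))"
        by (rule sum.cong[OF refl], rule U_nat[OF X Y U x act_ob[OF x] Tr_hom[OF x] dh])
      finally have "U x h \<gamma> = (\<Sum>\<alpha>'\<in>?S. U (act \<alpha>' x) (dlt (h \<alpha>')) (\<gamma> + - \<alpha>'))"
        unfolding sum_fun_apply using Tr_map[OF Y x U_sp[OF X Y U act_ob[OF x] dh]] by simp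
      also have "\<dots> = (\<Sum>\<alpha>'\<in>?S. G (\<gamma> + - \<alpha>'))"
      proof (rule sum.cong[OF refl])
        fix \<alpha>'
        have ea: "act (- (\<gamma> + - \<alpha>')) (act \<gamma> x) = act \<alpha>' x" by (simp only: act_neg_add[OF x] e1)
        have m: "h \<alpha>' \<in> mSp X (act (- (\<gamma> + - \<alpha>')) (act \<gamma> x))"
          unfolding ea by (rule hs)
        show "U (act \<alpha>' x) (dlt (h \<alpha>')) (\<gamma> + - \<alpha>') = G (\<gamma> + - \<alpha>')"
          unfolding G_def e1 famU_in[OF X Y U act_ob[OF x] m] ea by (rule refl)
      qed
      also have "\<dots> = (\<Sum>\<alpha>\<in>(\<lambda>\<alpha>'. \<gamma> + - \<alpha>') ` ?S. G \<alpha>)"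
        by (rule sum.reindex[symmetric, unfolded comp_def]) (auto simp only: inj_on_def e3)
      also have "\<dots> = (\<Sum>\<alpha>\<in>?A. G \<alpha>)"
      proof (rule sum_cong_supp)
        show "finite ((\<lambda>\<alpha>'. \<gamma> + - \<alpha>') ` ?S)" using S by simp
        show "finite ?A" by (rule A)
        show "G \<alpha> = 0" if "\<alpha> \<in> (\<lambda>\<alpha>'. \<gamma> + - \<alpha>') ` ?S" "\<alpha> \<notin> ?A" for \<alpha>
          using that by (simp add: G_def)
        show "G \<alpha> = 0" if "\<alpha> \<in> ?A" "\<alpha> \<notin> (\<lambda>\<alpha>'. \<gamma> + - \<alpha>') ` ?S" for \<alpha>
        proof -
          have "h (- \<alpha> + \<gamma>) = 0"
          proof (rule ccontr)
            assume "h (- \<alpha> + \<gamma>) \<noteq> 0"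
            then have "\<gamma> + - (- \<alpha> + \<gamma>) \<in> (\<lambda>\<alpha>'. \<gamma> + - \<alpha>') ` ?S" by blast
            then have "\<alpha> \<in> (\<lambda>\<alpha>'. \<gamma> + - \<alpha>') ` ?S" by (simp only: e2)
            with that(2) show False by blast
          qed
          then show ?thesis using u_0[OF famX[OF X Y] Y famU_modhom[OF X Y U]] by (simp add: G_def)
        qed
      qed simp
      also have "\<dots> = F1 R act actm X ?fam x h \<gamma>"
        using F1_apply[OF X Y famU_dsum x h] by (simp add: G_def)
      finally show "F1 R act actm X ?fam x h \<gamma> = U x h \<gamma>" by simp
    qed
  next
    case False
    then show ?thesis using F1_out[OF X Y False] U_out[OF X Y U False] by simp
  qed
qed

end

lemma F1_bij:
  assumes X: "modR R sc X" and Y: "modR R sc Y"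
  shows "bij_betw (F1 R act actm X) (dsum R act actm sc X Y) (modhom OC (psc sc) (pd act X) (pd act Y))"
proof -
  have Xm: "is_mod R sc X" and fgX: "fg R X" and Ym: "is_mod R sc Y" using X Y by (auto simp: modR_def)
  show ?thesis unfolding bij_betw_def
  proof
    show "inj_on (F1 R act actm X) (dsum R act actm sc X Y)"
      by (rule inj_onI, rule F1_inj[OF Xm Ym])
    show "F1 R act actm X ` dsum R act actm sc X Y = modhom OC (psc sc) (pd act X) (pd act Y)"
    proof
      show "F1 R act actm X ` dsum R act actm sc X Y \<subseteq> modhom OC (psc sc) (pd act X) (pd act Y)"
        using F1_modhom[OF Xm Ym] by blast
      show "modhom OC (psc sc) (pd act X) (pd act Y) \<subseteq> F1 R act actm X ` dsum R act actm sc X Y"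
      proof
        fix U assume U: "U \<in> modhom OC (psc sc) (pd act X) (pd act Y)"
        show "U \<in> F1 R act actm X ` dsum R act actm sc X Y"
          using F1_famU[OF Xm Ym U fgX] famU_dsum[OF Xm Ym U fgX] by (metis image_eqI)
      qed
    qed
  qed
qed

end

theorem mainTheorem6:
  fixes R :: "('o, 'a, 'k::comm_ring_1) kcat"
    and act :: "'g::group_add \<Rightarrow> 'o \<Rightarrow> 'o"
    and actm :: "'g \<Rightarrow> 'a \<Rightarrow> 'a"
    and sc :: "'k \<Rightarrow> 'v::ab_group_add \<Rightarrow> 'v"
  assumes "Gcat R act actm"
    and "module sc"
  shows
    "(\<forall>X. modR R sc X \<longrightarrow> modR (orbit_cat R act actm) (psc sc) (pd act X)) \<and>
     (\<forall>\<mu> X. modR R sc X \<longrightarrow>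
        phi R act \<mu> X \<in> modhom (orbit_cat R act actm) (psc sc) (pd act X) (pd act (gact act actm \<mu> X)) \<and>
        (\<exists>\<psi>\<in>modhom (orbit_cat R act actm) (psc sc) (pd act (gact act actm \<mu> X)) (pd act X).
            mcomp (cOb R) (pd act X) \<psi> (phi R act \<mu> X) = mid (cOb R) (pd act X) \<and>
            mcomp (cOb R) (pd act (gact act actm \<mu> X)) (phi R act \<mu> X) \<psi>
              = mid (cOb R) (pd act (gact act actm \<mu> X)))) \<and>
     (\<forall>\<mu> X X' u. modR R sc X \<and> modR R sc X' \<and> u \<in> modhom R sc X X' \<longrightarrow>
        mcomp (cOb R) (pd act X) (pdm R act (gact act actm \<mu> X) (gactm R act \<mu> u)) (phi R act \<mu> X)
          = mcomp (cOb R) (pd act X) (phi R act \<mu> X') (pdm R act X u)) \<and>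
     (\<forall>X. modR R sc X \<longrightarrow> phi R act 0 X = mid (cOb R) (pd act X)) \<and>
     (\<forall>\<alpha> \<beta> X. modR R sc X \<longrightarrow>
        mcomp (cOb R) (pd act X) (phi R act \<beta> (gact act actm \<alpha> X)) (phi R act \<alpha> X)
          = phi R act (\<beta> + \<alpha>) X) \<and>
     (\<forall>X Y. modR R sc X \<and> modR R sc Y \<longrightarrow>
        bij_betw (F1 R act actm X) (dsum R act actm sc X Y)
          (modhom (orbit_cat R act actm) (psc sc) (pd act X) (pd act Y)))"
proof -
  interpret GC R act actm sc by (rule GC.intro[OF assms])
  show ?thesis
  proof (intro conjI allI impI)
    fix X assume "modR R sc X"
    then show "modR (orbit_cat R act actm) (psc sc) (pd act X)"
      using pd_modR by (auto simp: modR_def)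
  next
    fix \<mu> X assume "modR R sc X"
    then have X: "is_mod R sc X" by (simp add: modR_def)
    show "phi R act \<mu> X \<in> modhom (orbit_cat R act actm) (psc sc) (pd act X) (pd act (gact act actm \<mu> X))"
      by (rule phi_modhom[OF X])
    show "\<exists>\<psi>\<in>modhom (orbit_cat R act actm) (psc sc) (pd act (gact act actm \<mu> X)) (pd act X).
            mcomp (cOb R) (pd act X) \<psi> (phi R act \<mu> X) = mid (cOb R) (pd act X) \<and>
            mcomp (cOb R) (pd act (gact act actm \<mu> X)) (phi R act \<mu> X) \<psi>
              = mid (cOb R) (pd act (gact act actm \<mu> X))"
      using psi_modhom[OF X] psi_inv by blast
  next
    fix \<mu> X X' u assume a: "modR R sc X \<and> modR R sc X' \<and> u \<in> modhom R sc X X'"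
    then have X: "is_mod R sc X" and X': "is_mod R sc X'" and u: "u \<in> modhom R sc X X'"
      by (auto simp: modR_def)
    show "mcomp (cOb R) (pd act X) (pdm R act (gact act actm \<mu> X) (gactm R act \<mu> u)) (phi R act \<mu> X)
          = mcomp (cOb R) (pd act X) (phi R act \<mu> X') (pdm R act X u)"
      by (rule phi_natural[OF X X' u])
  next
    fix X show "phi R act 0 X = mid (cOb R) (pd act X)" by (rule phi_zero)
  next
    fix \<alpha> \<beta> X
    show "mcomp (cOb R) (pd act X) (phi R act \<beta> (gact act actm \<alpha> X)) (phi R act \<alpha> X)
          = phi R act (\<beta> + \<alpha>) X" by (rule phi_comp)
  next
    fix X Y assume "modR R sc X \<and> modR R sc Y"
    then show "bij_betw (F1 R act actm X) (dsum R act actm sc X Y)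
          (modhom (orbit_cat R act actm) (psc sc) (pd act X) (pd act Y))"
      using F1_bij by blast
  qed
qed

end
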